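(* Let $H$ be a finite, connected, $d$-regular graph on $[n]$ and $\Phi(x,y)$ a standard symmetric polynomial of partial degree $d$. Let $J$ be the set of improper points of $U(H,\Phi)$. Then (i) $J$ is finite; (ii) if $J\ne\emptyset$, then $\dim U(H,\Phi)=1$.
   Context: A symmetric polynomial $\Phi(x,y)\in\mathbb{C}[x,y]$ ($\Phi(x,y)=\Phi(y,x)$) has partial degree $d$ if its degree in $y$ is $d$. $\Phi$ is standard if it is squarefree, $\Phi(x,x)$ is not identically zero, and $\Phi$ has no nonconstant factor depending only on $x$ (or only on $y$). With $E$ the edge set of $H$: $S(H,\Phi)=\{\Phi(x_i,x_j): ij\in E\}$, $W(H,\Phi)=\mathbb{V}(S(H,\Phi))\subseteq\mathbb{C}^n$, $Z(H,\Phi)=W(H,\Phi)\cap\bigcup_{i>j}\mathbb{V}(x_i-x_j)$, and $U(H,\Phi)$ is the Zariski closure of $W(H,\Phi)\setminus Z(H,\Phi)$. A point $(u_1,\dots,u_n)$ is proper if its coordinates are pairwise distinct, improper otherwise. *)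

theory Defs
  imports "HOL-Computational_Algebra.Polynomial" "HOL-Computational_Algebra.Polynomial_Factorial"
          "HOL-Computational_Algebra.Squarefree"
begin

text \<open>A polynomial Phi(x,y) in C[x,y] is represented as a polynomial in y whose
  coefficients are polynomials in x.\<close>

definition eval2 :: "complex poly poly \<Rightarrow> complex \<Rightarrow> complex \<Rightarrow> complex" where
  "eval2 P x y = poly (map_poly (\<lambda>c. poly c x) P) y"

definition symmetric2 :: "complex poly poly \<Rightarrow> bool" where
  "symmetric2 P \<longleftrightarrow> (\<forall>x y. eval2 P x y = eval2 P y x)"

definition partial_degree :: "complex poly poly \<Rightarrow> nat" where
  "partial_degree P = degree P"

definition standard2 :: "complex poly poly \<Rightarrow> bool" where
  "standard2 P \<longleftrightarrow>
     squarefree P \<and>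
     (\<exists>x. eval2 P x x \<noteq> 0) \<and>
     (\<forall>p :: complex poly. degree p > 0 \<longrightarrow> \<not> ([:p:] dvd P)) \<and>
     (\<forall>q :: complex poly. degree q > 0 \<longrightarrow> \<not> (map_poly (\<lambda>c. [:c:]) q dvd P))"

inductive_set poly_fun :: "(('v \<Rightarrow> complex) \<Rightarrow> complex) set" where
  pf_const: "(\<lambda>_. c) \<in> poly_fun"
| pf_var: "(\<lambda>u. u i) \<in> poly_fun"
| pf_add: "f \<in> poly_fun \<Longrightarrow> g \<in> poly_fun \<Longrightarrow> (\<lambda>u. f u + g u) \<in> poly_fun"
| pf_mult: "f \<in> poly_fun \<Longrightarrow> g \<in> poly_fun \<Longrightarrow> (\<lambda>u. f u * g u) \<in> poly_fun"

definition zero_set :: "(('v \<Rightarrow> complex) \<Rightarrow> complex) set \<Rightarrow> ('v \<Rightarrow> complex) set" where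
  "zero_set S = {u. \<forall>f\<in>S. f u = 0}"

definition zariski_closed :: "('v \<Rightarrow> complex) set \<Rightarrow> bool" where
  "zariski_closed A \<longleftrightarrow> (\<exists>S. S \<subseteq> poly_fun \<and> A = zero_set S)"

definition zariski_closure :: "('v \<Rightarrow> complex) set \<Rightarrow> ('v \<Rightarrow> complex) set" where
  "zariski_closure A = \<Inter>{C. zariski_closed C \<and> A \<subseteq> C}"

definition zariski_irreducible :: "('v \<Rightarrow> complex) set \<Rightarrow> bool" where
  "zariski_irreducible Y \<longleftrightarrow> Y \<noteq> {} \<and>
     (\<forall>A B. zariski_closed A \<and> zariski_closed B \<and> Y \<subseteq> A \<union> B \<longrightarrow> Y \<subseteq> A \<or> Y \<subseteq> B)"

definition irred_chain :: "('v \<Rightarrow> complex) set \<Rightarrow> nat \<Rightarrow> bool" where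
  "irred_chain A k \<longleftrightarrow> (\<exists>Y :: nat \<Rightarrow> ('v \<Rightarrow> complex) set.
      (\<forall>i\<le>k. zariski_closed (Y i) \<and> zariski_irreducible (Y i) \<and> Y i \<subseteq> A) \<and>
      (\<forall>i<k. Y i \<subset> Y (Suc i)))"

text \<open>Dimension (Krull dimension of the Zariski topology) of a subset of C^V.
  Chains have length at most CARD('v), so the supremum is a maximum.\<close>
definition zariski_dim :: "('v::finite \<Rightarrow> complex) set \<Rightarrow> nat" where
  "zariski_dim A = Sup {k. irred_chain A k}"

definition simple_graph :: "('v \<Rightarrow> 'v \<Rightarrow> bool) \<Rightarrow> bool" where
  "simple_graph E \<longleftrightarrow> (\<forall>i j. E i j \<longrightarrow> E j i) \<and> (\<forall>i. \<not> E i i)"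

definition graph_connected :: "('v \<Rightarrow> 'v \<Rightarrow> bool) \<Rightarrow> bool" where
  "graph_connected E \<longleftrightarrow> (\<forall>i j. E\<^sup>*\<^sup>* i j)"

definition regular :: "('v \<Rightarrow> 'v \<Rightarrow> bool) \<Rightarrow> nat \<Rightarrow> bool" where
  "regular E d \<longleftrightarrow> (\<forall>i. card {j. E i j} = d)"

definition W_var :: "('v \<Rightarrow> 'v \<Rightarrow> bool) \<Rightarrow> complex poly poly \<Rightarrow> ('v \<Rightarrow> complex) set" where
  "W_var E P = {u. \<forall>i j. E i j \<longrightarrow> eval2 P (u i) (u j) = 0}"

definition Z_var :: "('v \<Rightarrow> 'v \<Rightarrow> bool) \<Rightarrow> complex poly poly \<Rightarrow> ('v \<Rightarrow> complex) set" where
  "Z_var E P = W_var E P \<inter> {u. \<exists>i j. i \<noteq> j \<and> u i = u j}"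

definition U_var :: "('v \<Rightarrow> 'v \<Rightarrow> bool) \<Rightarrow> complex poly poly \<Rightarrow> ('v \<Rightarrow> complex) set" where
  "U_var E P = zariski_closure (W_var E P - Z_var E P)"

definition improper :: "('v \<Rightarrow> complex) \<Rightarrow> bool" where
  "improper u \<longleftrightarrow> (\<exists>i j. i \<noteq> j \<and> u i = u j)"

end

theory Submission
  imports Defs "HOL-Library.FuncSet"
begin


lemma dep_lemma:
  fixes v :: "'k \<Rightarrow> 'e \<Rightarrow> 'a::idom"
  assumes "finite E" "finite K" "card E < card K"
  shows "\<exists>l. (\<exists>k\<in>K. l k \<noteq> 0) \<and> (\<forall>e\<in>E. (\<Sum>k\<in>K. l k * v k e) = 0)"
  using assms
proof (induction E arbitrary: K v rule: finite_induct)
  case empty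
  then obtain k where "k \<in> K" by fastforce
  then show ?case by (intro exI[of _ "\<lambda>k'. if k' = k then 1 else 0"]) auto
next
  case (insert e0 E)
  show ?case
  proof (cases "\<forall>k\<in>K. v k e0 = 0")
    case True
    from insert.IH[of K v] insert.prems insert.hyps obtain l where
      l: "(\<exists>k\<in>K. l k \<noteq> 0)" "(\<forall>e\<in>E. (\<Sum>k\<in>K. l k * v k e) = 0)" by auto
    then show ?thesis using True by (intro exI[of _ l]) auto
  next
    case False
    then obtain p where p: "p \<in> K" "v p e0 \<noteq> 0" by auto
    define a where "a = v p e0"
    define K' where "K' = K - {p}"
    define w where "w = (\<lambda>k e. a * v k e - v k e0 * v p e)"
    have cK: "card E < card K'" using insert.prems insert.hyps p unfolding K'_def by auto
    from insert.IH[of K' w] cK insert.prems obtain l where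
      l: "(\<exists>k\<in>K'. l k \<noteq> 0)" "(\<forall>e\<in>E. (\<Sum>k\<in>K'. l k * w k e) = 0)" unfolding K'_def by auto
    define l' where "l' = (\<lambda>k. if k = p then - (\<Sum>k\<in>K'. l k * v k e0) else l k * a)"
    have fK': "finite K'" using insert.prems unfolding K'_def by auto
    have split: "\<And>f. (\<Sum>k\<in>K. f k) = f p + (\<Sum>k\<in>K'. f k)"
      using p insert.prems unfolding K'_def by (simp add: sum.remove)
    have pK': "p \<notin> K'" unfolding K'_def by auto
    have eq: "(\<Sum>k\<in>K. l' k * v k e) = (\<Sum>k\<in>K'. l k * w k e)" for e
    proof -
      have "(\<Sum>k\<in>K. l' k * v k e) = l' p * v p e + (\<Sum>k\<in>K'. l' k * v k e)" by (rule split)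
      also have "(\<Sum>k\<in>K'. l' k * v k e) = (\<Sum>k\<in>K'. l k * a * v k e)"
        using pK' by (intro sum.cong) (auto simp: l'_def)
      also have "l' p * v p e = - (\<Sum>k\<in>K'. l k * v k e0 * v p e)"
        by (simp add: l'_def sum_distrib_right)
      finally show ?thesis
        by (simp add: w_def algebra_simps sum_subtractf sum_distrib_left)
    qed
    show ?thesis
    proof (intro exI[of _ l'] conjI)
      from l(1) obtain k where "k \<in> K'" "l k \<noteq> 0" by auto
      then show "\<exists>k\<in>K. l' k \<noteq> 0" using pK' p unfolding K'_def l'_def a_def
        by (intro bexI[of _ k]) auto
      show "\<forall>e\<in>insert e0 E. (\<Sum>k\<in>K. l' k * v k e) = 0"
      proof
        fix e assume "e \<in> insert e0 E"
        then show "(\<Sum>k\<in>K. l' k * v k e) = 0"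
        proof
          assume "e = e0"
          have "(\<Sum>k\<in>K'. l k * w k e0) = 0"
            by (simp add: w_def a_def algebra_simps)
          then show ?thesis using eq \<open>e = e0\<close> by simp
        next
          assume "e \<in> E" then show ?thesis using eq l(2) by simp
        qed
      qed
    qed
  qed
qed


lemma noeth_lemma:
  fixes M :: "('e \<Rightarrow> complex poly) set"
  assumes "finite E"
    and add: "\<And>p q. p \<in> M \<Longrightarrow> q \<in> M \<Longrightarrow> (\<lambda>e. p e + q e) \<in> M"
    and smul: "\<And>p c. p \<in> M \<Longrightarrow> (\<lambda>e. c * p e) \<in> M"
  shows "\<exists>G. finite G \<and> G \<subseteq> M \<and> (\<forall>p\<in>M. \<exists>l. \<forall>e\<in>E. p e = (\<Sum>g\<in>G. l g * g e))"
  using assms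
proof (induction E arbitrary: M rule: finite_induct)
  case empty
  then show ?case by (intro exI[of _ "{}"]) auto
next
  case (insert e0 E)
  define K where "K = {p\<in>M. p e0 = 0}"
  have "\<exists>G. finite G \<and> G \<subseteq> K \<and> (\<forall>p\<in>K. \<exists>l. \<forall>e\<in>E. p e = (\<Sum>g\<in>G. l g * g e))"
    by (rule insert.IH) (auto simp: K_def intro: insert.prems)
  then obtain G where G: "finite G" "G \<subseteq> K" "\<And>p. p\<in>K \<Longrightarrow> \<exists>l. \<forall>e\<in>E. p e = (\<Sum>g\<in>G. l g * g e)"
    by blast
  have G0: "g e0 = 0" if "g \<in> G" for g using G(2) that unfolding K_def by auto
  show ?case
  proof (cases "\<exists>p\<in>M. p e0 \<noteq> 0")
    case False
    show ?thesis
    proof (intro exI[of _ G] conjI ballI)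
      show "finite G" "G \<subseteq> M" using G unfolding K_def by auto
      fix p assume "p \<in> M"
      then have "p \<in> K" using False unfolding K_def by auto
      then obtain l where l: "\<forall>e\<in>E. p e = (\<Sum>g\<in>G. l g * g e)" using G(3) by blast
      show "\<exists>l. \<forall>e\<in>insert e0 E. p e = (\<Sum>g\<in>G. l g * g e)"
        using l G0 \<open>p \<in> K\<close> unfolding K_def by (intro exI[of _ l]) (auto intro!: sum.neutral)
    qed
  next
    case True
    define P where "P = (\<lambda>n. \<exists>p\<in>M. p e0 \<noteq> 0 \<and> degree (p e0) = n)"
    have "\<exists>n. P n" using True unfolding P_def by auto
    then obtain n where n: "P n" "\<And>m. P m \<Longrightarrow> n \<le> m"
      by (metis ex_has_least_nat[where m="\<lambda>n. n"])
    then obtain g0 where g0: "g0 \<in> M" "g0 e0 \<noteq> 0" "degree (g0 e0) = n" unfolding P_def by auto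
    have g0K: "g0 \<notin> G" using g0 G(2) unfolding K_def by auto
    show ?thesis
    proof (intro exI[of _ "insert g0 G"] conjI ballI)
      show "finite (insert g0 G)" "insert g0 G \<subseteq> M" using G g0 unfolding K_def by auto
      fix p assume pM: "p \<in> M"
      define q where "q = p e0 div g0 e0"
      define p' where "p' = (\<lambda>e. p e + (- q) * g0 e)"
      have p'M: "p' \<in> M" unfolding p'_def using pM g0(1) insert.prems by blast
      have "p' e0 = p e0 mod g0 e0" unfolding p'_def q_def
        by (metis add_diff_cancel_left' div_mult_mod_eq minus_mult_left diff_conv_add_uminus mult.commute)
      moreover have pmod: "p e0 mod g0 e0 = 0"
      proof (rule ccontr)
        assume ne: "p e0 mod g0 e0 \<noteq> 0"
        then have "degree (p e0 mod g0 e0) < n" using degree_mod_less'[OF g0(2) ne] g0(3) by simp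
        moreover have "P (degree (p e0 mod g0 e0))" using ne p'M \<open>p' e0 = p e0 mod g0 e0\<close>
          unfolding P_def by metis
        ultimately show False using n(2) by fastforce
      qed
      ultimately have "p' \<in> K" using p'M unfolding K_def by auto
      then obtain l where l: "\<forall>e\<in>E. p' e = (\<Sum>g\<in>G. l g * g e)" using G(3) by blast
      define l' where "l' = (\<lambda>g. if g = g0 then q else l g)"
      have sG: "(\<Sum>g\<in>insert g0 G. l' g * g e) = q * g0 e + (\<Sum>g\<in>G. l g * g e)" for e
      proof -
        have "(\<Sum>g\<in>G. l' g * g e) = (\<Sum>g\<in>G. l g * g e)"
          using g0K by (intro sum.cong) (auto simp: l'_def)
        then show ?thesis using g0K G(1) by (simp add: l'_def)
      qed
      show "\<exists>l. \<forall>e\<in>insert e0 E. p e = (\<Sum>g\<in>insert g0 G. l g * g e)"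
      proof (intro exI[of _ l'] ballI)
        fix e assume "e \<in> insert e0 E"
        then show "p e = (\<Sum>g\<in>insert g0 G. l' g * g e)"
        proof
          assume "e = e0"
          have "(\<Sum>g\<in>G. l g * g e0) = 0" using G0 by (auto intro!: sum.neutral)
          then show ?thesis using \<open>e = e0\<close> sG[of e0] using pmod div_mult_mod_eq[of "p e0" "g0 e0"] unfolding q_def by simp
        next
          assume "e \<in> E"
          then have "p e = p' e + q * g0 e" unfolding p'_def by simp
          then show ?thesis using l \<open>e \<in> E\<close> sG[of e] by simp
        qed
      qed
    qed
  qed
qed


lemma pf_minus: "f \<in> poly_fun \<Longrightarrow> (\<lambda>u. - f u) \<in> poly_fun"
proof -
  assume "f \<in> poly_fun"
  then have "(\<lambda>u. (-1) * f u) \<in> poly_fun" by (intro pf_mult pf_const)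
  then show ?thesis by simp
qed

lemma pf_diff: "f \<in> poly_fun \<Longrightarrow> g \<in> poly_fun \<Longrightarrow> (\<lambda>u. f u - g u) \<in> poly_fun"
  using pf_add[OF _ pf_minus, of f g] by simp

lemma pf_sum: "finite I \<Longrightarrow> (\<And>i. i \<in> I \<Longrightarrow> f i \<in> poly_fun) \<Longrightarrow> (\<lambda>u. \<Sum>i\<in>I. f i u) \<in> poly_fun"
  by (induction I rule: finite_induct) (auto intro: pf_add pf_const)

lemma pf_prod: "finite I \<Longrightarrow> (\<And>i. i \<in> I \<Longrightarrow> f i \<in> poly_fun) \<Longrightarrow> (\<lambda>u. \<Prod>i\<in>I. f i u) \<in> poly_fun"
  by (induction I rule: finite_induct) (auto intro: pf_mult pf_const)

lemma pf_pow: "f \<in> poly_fun \<Longrightarrow> (\<lambda>u. f u ^ n) \<in> poly_fun"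
  by (induction n) (auto intro: pf_mult pf_const)

lemma pf_poly: "f \<in> poly_fun \<Longrightarrow> (\<lambda>u. poly c (f u)) \<in> poly_fun"
proof (induction c)
  case 0 then show ?case by (simp add: pf_const)
next
  case (pCons a c)
  then have "(\<lambda>u. a + f u * poly c (f u)) \<in> poly_fun" by (intro pf_add pf_const pf_mult) auto
  then show ?case by simp
qed

lemma eval2_pCons: "eval2 (pCons c Q) a b = poly c a + b * eval2 Q a b"
  unfolding eval2_def by (simp add: map_poly_pCons)

lemma eval2_0[simp]: "eval2 0 a b = 0"
  unfolding eval2_def by simp

lemma pf_eval2: "f \<in> poly_fun \<Longrightarrow> g \<in> poly_fun \<Longrightarrow> (\<lambda>u. eval2 Q (f u) (g u)) \<in> poly_fun"
proof (induction Q)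
  case 0 then show ?case by (simp add: pf_const)
next
  case (pCons a Q)
  then have "(\<lambda>u. poly a (f u) + g u * eval2 Q (f u) (g u)) \<in> poly_fun"
    by (intro pf_add pf_poly pf_mult) auto
  then show ?case by (simp add: eval2_pCons)
qed

lemma eval2_at0: "eval2 R a 0 = poly (coeff R 0) a"
  by (cases R) (simp add: eval2_pCons)

lemma poly_sum_le: "degree (p::'a::comm_semiring_1 poly) \<le> n \<Longrightarrow> poly p x = (\<Sum>i\<le>n. coeff p i * x ^ i)"
proof -
  assume "degree p \<le> n"
  then have "(\<Sum>i\<le>n. coeff p i * x ^ i) = (\<Sum>i\<le>degree p. coeff p i * x ^ i)"
    by (intro sum.mono_neutral_right) (auto simp: coeff_eq_0)
  then show ?thesis by (simp add: poly_altdef[of p x])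
qed

lemma eval2_sum: "eval2 P a b = (\<Sum>i\<le>degree P. poly (coeff P i) a * b ^ i)"
proof -
  have "degree (map_poly (\<lambda>c. poly c a) P) \<le> degree P" by (rule map_poly_degree_leq)
  then show ?thesis unfolding eval2_def by (subst poly_sum_le) (auto simp: coeff_map_poly)
qed

lemma zero_set_closed: "S \<subseteq> poly_fun \<Longrightarrow> zariski_closed (zero_set S)"
  unfolding zariski_closed_def by auto

lemma closed_single_fun: "f \<in> poly_fun \<Longrightarrow> zariski_closed {u. f u = 0}"
  unfolding zariski_closed_def zero_set_def by (intro exI[of _ "{f}"]) auto

lemma zc_Int: "zariski_closed A \<Longrightarrow> zariski_closed B \<Longrightarrow> zariski_closed (A \<inter> B)"
  unfolding zariski_closed_def zero_set_def
  by (elim exE conjE, rename_tac S T, rule_tac x="S \<union> T" in exI) auto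

lemma zc_Un: "zariski_closed A \<Longrightarrow> zariski_closed B \<Longrightarrow> zariski_closed (A \<union> B)"
proof -
  assume "zariski_closed A" "zariski_closed B"
  then obtain S T where S: "S \<subseteq> poly_fun" "A = zero_set S" and T: "T \<subseteq> poly_fun" "B = zero_set T"
    unfolding zariski_closed_def by blast
  define R where "R = {(\<lambda>u. f u * g u) | f g. f \<in> S \<and> g \<in> T}"
  have "R \<subseteq> poly_fun" unfolding R_def using S T by (auto intro: pf_mult)
  moreover have "A \<union> B = zero_set R"
  proof
    show "A \<union> B \<subseteq> zero_set R" unfolding R_def S T zero_set_def by auto
    show "zero_set R \<subseteq> A \<union> B"
    proof
      fix u assume u: "u \<in> zero_set R"
      show "u \<in> A \<union> B"
      proof (rule ccontr)
        assume "u \<notin> A \<union> B"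
        then obtain f g where "f \<in> S" "f u \<noteq> 0" "g \<in> T" "g u \<noteq> 0"
          unfolding S T zero_set_def by auto
        then have "(\<lambda>u. f u * g u) \<in> R" unfolding R_def by auto
        then show False using u \<open>f u \<noteq> 0\<close> \<open>g u \<noteq> 0\<close> unfolding zero_set_def by auto
      qed
    qed
  qed
  ultimately show ?thesis unfolding zariski_closed_def by auto
qed

lemma zc_empty: "zariski_closed {}"
proof -
  have "{} = zero_set {(\<lambda>u. 1)}" unfolding zero_set_def by auto
  moreover have "{(\<lambda>u. 1)} \<subseteq> poly_fun" by (auto intro: pf_const)
  ultimately show ?thesis unfolding zariski_closed_def by blast
qed

lemma zc_UNIV: "zariski_closed UNIV"
proof -
  have "UNIV = zero_set {}" unfolding zero_set_def by auto
  then show ?thesis unfolding zariski_closed_def by auto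
qed

lemma zc_singleton: "zariski_closed {p}"
proof -
  have "{p} = zero_set {(\<lambda>u. u i - p i) | i. True}"
  proof (intro equalityI subsetI)
    fix x assume "x \<in> zero_set {(\<lambda>u. u i - p i) | i. True}"
    then have "x i = p i" for i unfolding zero_set_def by auto
    then show "x \<in> {p}" by auto
  qed (auto simp: zero_set_def)
  moreover have "{(\<lambda>u. u i - p i) | i. True} \<subseteq> poly_fun" by (auto intro: pf_diff pf_var pf_const)
  ultimately show ?thesis unfolding zariski_closed_def by blast
qed

lemma zc_finite: "finite A \<Longrightarrow> zariski_closed A"
proof (induction A rule: finite_induct)
  case empty then show ?case by (rule zc_empty)
next
  case (insert a A)
  have "insert a A = {a} \<union> A" by auto
  then show ?case using zc_Un[OF zc_singleton insert.IH] by simp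
qed

lemma zc_Union: "finite C \<Longrightarrow> (\<And>A. A \<in> C \<Longrightarrow> zariski_closed A) \<Longrightarrow> zariski_closed (\<Union>C)"
  by (induction C rule: finite_induct) (auto intro: zc_empty zc_Un)

lemma closure_eq: "zariski_closure A = zero_set {f \<in> poly_fun. \<forall>u\<in>A. f u = 0}"
proof
  show "zariski_closure A \<subseteq> zero_set {f \<in> poly_fun. \<forall>u\<in>A. f u = 0}"
    unfolding zariski_closure_def
  proof (rule Inter_lower, safe)
    show "zariski_closed (zero_set {f \<in> poly_fun. \<forall>u\<in>A. f u = 0})" by (rule zero_set_closed) auto
    fix x assume "x \<in> A" then show "x \<in> zero_set {f \<in> poly_fun. \<forall>u\<in>A. f u = 0}"
      unfolding zero_set_def by auto
  qed
  show "zero_set {f \<in> poly_fun. \<forall>u\<in>A. f u = 0} \<subseteq> zariski_closure A"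
  proof
    fix u assume u: "u \<in> zero_set {f \<in> poly_fun. \<forall>u\<in>A. f u = 0}"
    show "u \<in> zariski_closure A" unfolding zariski_closure_def
    proof (rule InterI)
      fix C assume "C \<in> {C. zariski_closed C \<and> A \<subseteq> C}"
      then obtain S where S: "S \<subseteq> poly_fun" "C = zero_set S" "A \<subseteq> C" unfolding zariski_closed_def by auto
      have "f u = 0" if "f \<in> S" for f
      proof -
        have "\<forall>v\<in>A. f v = 0" using S that unfolding zero_set_def by auto
        then have "f \<in> {f \<in> poly_fun. \<forall>u\<in>A. f u = 0}" using S that by auto
        then show ?thesis using u unfolding zero_set_def by auto
      qed
      then show "u \<in> C" using S unfolding zero_set_def by auto
    qed
  qed
qed

lemma closure_closed: "zariski_closed (zariski_closure A)"
  unfolding closure_eq by (rule zero_set_closed) auto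

lemma closure_sub: "A \<subseteq> zariski_closure A"
  unfolding closure_eq zero_set_def by auto

lemma closure_min: "A \<subseteq> C \<Longrightarrow> zariski_closed C \<Longrightarrow> zariski_closure A \<subseteq> C"
  unfolding zariski_closure_def by auto

lemma irred_Union:
  assumes "zariski_irreducible Y" "finite C" "\<And>A. A \<in> C \<Longrightarrow> zariski_closed A" "Y \<subseteq> \<Union>C"
  shows "\<exists>A\<in>C. Y \<subseteq> A"
  using assms(2,3,4)
proof (induction C rule: finite_induct)
  case empty then show ?case using assms(1) unfolding zariski_irreducible_def by auto
next
  case (insert A C)
  have "zariski_closed (\<Union>C)" using insert by (intro zc_Union) auto
  then have "Y \<subseteq> A \<or> Y \<subseteq> \<Union>C" using assms(1) insert.prems unfolding zariski_irreducible_def by auto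
  then show ?case using insert by auto
qed

lemma irred_singleton: "zariski_irreducible {p}"
  unfolding zariski_irreducible_def by auto

lemma W_closed: "zariski_closed (W_var E P)"
proof -
  have "W_var E P = zero_set {(\<lambda>u. eval2 P (u i) (u j)) | i j. E i j}"
    unfolding W_var_def zero_set_def by auto
  moreover have "{(\<lambda>u. eval2 P (u i) (u j)) | i j. E i j} \<subseteq> poly_fun"
    by (auto intro: pf_eval2 pf_var)
  ultimately show ?thesis unfolding zariski_closed_def by blast
qed

lemma improper_closed: "zariski_closed {u::'v::finite \<Rightarrow> complex. improper u}"
proof -
  define D where "D = (\<lambda>u::'v \<Rightarrow> complex. \<Prod>p\<in>{p. fst p \<noteq> snd p}. u (fst p) - u (snd p))"
  have "D \<in> poly_fun" unfolding D_def by (intro pf_prod pf_diff pf_var) auto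
  moreover have "{u. improper u} = {u. D u = 0}"
    unfolding D_def improper_def by auto
  ultimately show ?thesis using closed_single_fun by metis
qed


definition spanT :: "('v \<Rightarrow> complex) set \<Rightarrow> 'v \<Rightarrow> (('v \<Rightarrow> complex) \<Rightarrow> complex) set \<Rightarrow> (('v \<Rightarrow> complex) \<Rightarrow> complex) set" where
  "spanT T i0 B = {s. \<exists>p. \<forall>u\<in>T. s u = (\<Sum>e\<in>B. poly (p e) (u i0) * e u)}"

definition mok where
  "mok T i0 L B k f \<longleftrightarrow> (\<forall>s\<in>spanT T i0 B. (\<lambda>u. poly L (u i0) ^ k * f u * s u) \<in> spanT T i0 B)"

definition multok where
  "multok T i0 L B f \<longleftrightarrow> (\<exists>k. mok T i0 L B k f)"

lemma span_zero: "(\<lambda>u. 0) \<in> spanT T i0 B"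
  unfolding spanT_def by (intro CollectI exI[of _ "\<lambda>_. 0"]) simp

lemma span_add: "s1 \<in> spanT T i0 B \<Longrightarrow> s2 \<in> spanT T i0 B \<Longrightarrow> (\<lambda>u. s1 u + s2 u) \<in> spanT T i0 B"
  unfolding spanT_def
proof (elim CollectE exE, intro CollectI)
  fix p1 p2
  assume "\<forall>u\<in>T. s1 u = (\<Sum>e\<in>B. poly (p1 e) (u i0) * e u)" "\<forall>u\<in>T. s2 u = (\<Sum>e\<in>B. poly (p2 e) (u i0) * e u)"
  then show "\<exists>p. \<forall>u\<in>T. s1 u + s2 u = (\<Sum>e\<in>B. poly (p e) (u i0) * e u)"
    by (intro exI[of _ "\<lambda>e. p1 e + p2 e"]) (simp add: sum.distrib distrib_right)
qed

lemma span_smult: "s \<in> spanT T i0 B \<Longrightarrow> (\<lambda>u. poly c (u i0) * s u) \<in> spanT T i0 B"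
  unfolding spanT_def
proof (elim CollectE exE, intro CollectI)
  fix p
  assume "\<forall>u\<in>T. s u = (\<Sum>e\<in>B. poly (p e) (u i0) * e u)"
  then show "\<exists>p'. \<forall>u\<in>T. poly c (u i0) * s u = (\<Sum>e\<in>B. poly (p' e) (u i0) * e u)"
    by (intro exI[of _ "\<lambda>e. c * p e"]) (simp add: sum_distrib_left mult.assoc)
qed

lemma span_cong: "s \<in> spanT T i0 B \<Longrightarrow> (\<And>u. u \<in> T \<Longrightarrow> s' u = s u) \<Longrightarrow> s' \<in> spanT T i0 B"
  unfolding spanT_def by auto

lemma span_gen: "finite B \<Longrightarrow> e \<in> B \<Longrightarrow> e \<in> spanT T i0 B"
  unfolding spanT_def
proof (intro CollectI exI[of _ "\<lambda>e'. if e' = e then 1 else 0"] ballI)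
  fix u assume "finite B" "e \<in> B"
  have "(\<Sum>ea\<in>B. poly (if ea = e then 1 else 0) (u i0) * ea u) = (\<Sum>ea\<in>B. if ea = e then e u else 0)"
    by (intro sum.cong) auto
  also have "\<dots> = e u" using \<open>finite B\<close> \<open>e \<in> B\<close> by simp
  finally show "e u = (\<Sum>ea\<in>B. poly (if ea = e then 1 else 0) (u i0) * ea u)" by simp
qed

lemma span_sum: "finite I \<Longrightarrow> (\<And>i. i \<in> I \<Longrightarrow> f i \<in> spanT T i0 B) \<Longrightarrow> (\<lambda>u. \<Sum>i\<in>I. f i u) \<in> spanT T i0 B"
  by (induction I rule: finite_induct) (auto intro: span_zero span_add)

lemma span_mono: "T' \<subseteq> T \<Longrightarrow> s \<in> spanT T i0 B \<Longrightarrow> s \<in> spanT T' i0 B"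
  unfolding spanT_def by blast

lemma span_linear:
  assumes "finite B" "s \<in> spanT T i0 B"
    and gen: "\<And>e. e \<in> B \<Longrightarrow> (\<lambda>u. g u * e u) \<in> spanT T i0 B'"
  shows "(\<lambda>u. g u * s u) \<in> spanT T i0 B'"
proof -
  obtain p where p: "\<forall>u\<in>T. s u = (\<Sum>e\<in>B. poly (p e) (u i0) * e u)" using assms(2) unfolding spanT_def by auto
  have "(\<lambda>u. \<Sum>e\<in>B. poly (p e) (u i0) * (g u * e u)) \<in> spanT T i0 B'"
    using assms(1) by (intro span_sum span_smult gen)
  then show ?thesis
    by (rule span_cong) (simp add: p sum_distrib_left algebra_simps)
qed

lemma mok_gen:
  assumes "finite B" "\<And>e. e \<in> B \<Longrightarrow> (\<lambda>u. poly L (u i0) ^ k * f u * e u) \<in> spanT T i0 B"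
  shows "mok T i0 L B k f"
  unfolding mok_def
proof
  fix s assume "s \<in> spanT T i0 B"
  from span_linear[OF assms(1) this, of "\<lambda>u. poly L (u i0) ^ k * f u"] assms(2)
  show "(\<lambda>u. poly L (u i0) ^ k * f u * s u) \<in> spanT T i0 B" by simp
qed

lemma mok_mono: "mok T i0 L B k f \<Longrightarrow> k \<le> k' \<Longrightarrow> mok T i0 L B k' f"
  unfolding mok_def
proof
  fix s assume m: "\<forall>s\<in>spanT T i0 B. (\<lambda>u. poly L (u i0) ^ k * f u * s u) \<in> spanT T i0 B"
    and "k \<le> k'" and s: "s \<in> spanT T i0 B"
  then have "(\<lambda>u. poly (L ^ (k' - k)) (u i0) * (poly L (u i0) ^ k * f u * s u)) \<in> spanT T i0 B"
    by (intro span_smult) auto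
  then show "(\<lambda>u. poly L (u i0) ^ k' * f u * s u) \<in> spanT T i0 B"
    by (rule span_cong) (simp add: poly_power power_add[symmetric] \<open>k \<le> k'\<close> mult.assoc)
qed

lemma mok_const: "mok T i0 L B 0 (\<lambda>u. c)"
  unfolding mok_def using span_smult[of _ T i0 B "[:c:]"] by simp

lemma mok_x: "mok T i0 L B 0 (\<lambda>u. u i0)"
  unfolding mok_def using span_smult[of _ T i0 B "[:0,1:]"] by simp

lemma mok_add: "mok T i0 L B k f \<Longrightarrow> mok T i0 L B k g \<Longrightarrow> mok T i0 L B k (\<lambda>u. f u + g u)"
  unfolding mok_def
proof
  fix s assume "\<forall>s\<in>spanT T i0 B. (\<lambda>u. poly L (u i0) ^ k * f u * s u) \<in> spanT T i0 B"
    "\<forall>s\<in>spanT T i0 B. (\<lambda>u. poly L (u i0) ^ k * g u * s u) \<in> spanT T i0 B" "s \<in> spanT T i0 B"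
  then have "(\<lambda>u. poly L (u i0) ^ k * f u * s u + poly L (u i0) ^ k * g u * s u) \<in> spanT T i0 B"
    by (intro span_add) auto
  then show "(\<lambda>u. poly L (u i0) ^ k * (f u + g u) * s u) \<in> spanT T i0 B"
    by (rule span_cong) (simp add: algebra_simps)
qed

lemma mok_mult: "mok T i0 L B k f \<Longrightarrow> mok T i0 L B k' g \<Longrightarrow> mok T i0 L B (k + k') (\<lambda>u. f u * g u)"
  unfolding mok_def
proof
  fix s assume f: "\<forall>s\<in>spanT T i0 B. (\<lambda>u. poly L (u i0) ^ k * f u * s u) \<in> spanT T i0 B"
    and g: "\<forall>s\<in>spanT T i0 B. (\<lambda>u. poly L (u i0) ^ k' * g u * s u) \<in> spanT T i0 B" and s: "s \<in> spanT T i0 B"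
  from g s have "(\<lambda>u. poly L (u i0) ^ k' * g u * s u) \<in> spanT T i0 B" by auto
  with f have "(\<lambda>u. poly L (u i0) ^ k * f u * (poly L (u i0) ^ k' * g u * s u)) \<in> spanT T i0 B" by auto
  then show "(\<lambda>u. poly L (u i0) ^ (k + k') * (f u * g u) * s u) \<in> spanT T i0 B"
    by (rule span_cong) (simp add: algebra_simps power_add)
qed

lemma multok_add: "multok T i0 L B f \<Longrightarrow> multok T i0 L B g \<Longrightarrow> multok T i0 L B (\<lambda>u. f u + g u)"
  unfolding multok_def
proof (elim exE)
  fix k k' assume "mok T i0 L B k f" "mok T i0 L B k' g"
  then have "mok T i0 L B (max k k') f" "mok T i0 L B (max k k') g" by (auto intro: mok_mono)
  then show "\<exists>k. mok T i0 L B k (\<lambda>u. f u + g u)" by (intro exI mok_add)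
qed

lemma multok_mult: "multok T i0 L B f \<Longrightarrow> multok T i0 L B g \<Longrightarrow> multok T i0 L B (\<lambda>u. f u * g u)"
  unfolding multok_def
proof (elim exE)
  fix k k' assume "mok T i0 L B k f" "mok T i0 L B k' g"
  then have "mok T i0 L B (k + k') (\<lambda>u. f u * g u)" by (rule mok_mult)
  then show "\<exists>k. mok T i0 L B k (\<lambda>u. f u * g u)" by blast
qed

lemma multok_const: "multok T i0 L B (\<lambda>u. c)"
  unfolding multok_def by (rule exI, rule mok_const)

lemma multok_x: "multok T i0 L B (\<lambda>u. u i0)"
  unfolding multok_def by (rule exI, rule mok_x)

lemma multok_pow: "multok T i0 L B f \<Longrightarrow> multok T i0 L B (\<lambda>u. f u ^ n)"
  by (induction n) (auto intro: multok_const multok_mult)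

lemma multok_poly: "multok T i0 L B h \<Longrightarrow> multok T i0 L B (\<lambda>u. poly c (h u))"
proof (induction c)
  case 0 then show ?case using multok_const[of T i0 L B 0] by simp
next
  case (pCons a c)
  then have "multok T i0 L B (\<lambda>u. a + h u * poly c (h u))"
    by (intro multok_add multok_const multok_mult) auto
  then show ?case by simp
qed

lemma multok_polyx: "multok T i0 L B (\<lambda>u. poly c (u i0))"
  by (rule multok_poly[OF multok_x])

lemma multok_eval2: "multok T i0 L B h \<Longrightarrow> multok T i0 L B (\<lambda>u. eval2 Q (u i0) (h u))"
proof (induction Q)
  case 0 then show ?case using multok_const[of T i0 L B 0] by simp
next
  case (pCons a Q)
  then have "multok T i0 L B (\<lambda>u. poly a (u i0) + h u * eval2 Q (u i0) (h u))"
    by (intro multok_add multok_polyx multok_mult) auto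
  then show ?case by (simp add: eval2_pCons)
qed

lemma multok_pf: "f \<in> poly_fun \<Longrightarrow> (\<And>j. multok T i0 L B (\<lambda>u. u j)) \<Longrightarrow> multok T i0 L B f"
  by (induction f rule: poly_fun.induct) (auto intro: multok_const multok_add multok_mult)

lemma mok_span: "mok T i0 L B k f \<Longrightarrow> s \<in> spanT T i0 B \<Longrightarrow> (\<lambda>u. poly L (u i0) ^ k * f u * s u) \<in> spanT T i0 B"
  unfolding mok_def by auto

lemma multok_shrink: "multok T i0 L B f \<Longrightarrow> T' \<subseteq> T \<Longrightarrow> multok T' i0 L B f"
  unfolding multok_def mok_def
proof (elim exE, intro exI ballI)
  fix k s
  assume m: "\<forall>s\<in>spanT T i0 B. (\<lambda>u. poly L (u i0) ^ k * f u * s u) \<in> spanT T i0 B"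
    and T': "T' \<subseteq> T" and s: "s \<in> spanT T' i0 B"
  from s obtain p where p: "\<forall>u\<in>T'. s u = (\<Sum>e\<in>B. poly (p e) (u i0) * e u)" unfolding spanT_def by auto
  define s0 where "s0 = (\<lambda>u. \<Sum>e\<in>B. poly (p e) (u i0) * e u)"
  have s0: "s0 \<in> spanT T i0 B" unfolding spanT_def s0_def by (intro CollectI exI[of _ p]) simp
  have "(\<lambda>u. poly L (u i0) ^ k * f u * s0 u) \<in> spanT T i0 B" using m s0 by (rule bspec)
  then have "(\<lambda>u. poly L (u i0) ^ k * f u * s0 u) \<in> spanT T' i0 B" by (rule span_mono[OF T'])
  then show "(\<lambda>u. poly L (u i0) ^ k * f u * s u) \<in> spanT T' i0 B"
  proof (rule span_cong)
    fix u assume "u \<in> T'" then show "poly L (u i0) ^ k * f u * s u = poly L (u i0) ^ k * f u * s0 u"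
      using p unfolding s0_def by simp
  qed
qed


lemma eval2_sum_le: "degree P \<le> n \<Longrightarrow> eval2 P a b = (\<Sum>i\<le>n. poly (coeff P i) a * b ^ i)"
proof -
  assume "degree P \<le> n"
  then have "(\<Sum>i\<le>n. poly (coeff P i) a * b ^ i) = (\<Sum>i\<le>degree P. poly (coeff P i) a * b ^ i)"
    by (intro sum.mono_neutral_right) (auto simp: coeff_eq_0)
  then show ?thesis by (simp add: eval2_sum)
qed

lemma eval2_pCons0: "eval2 (pCons 0 Q) a b = b * eval2 Q a b"
  by (simp add: eval2_pCons)

lemma finite_mok:
  assumes "finite I" "\<And>i. i \<in> I \<Longrightarrow> multok T i0 L B (f i)"
  shows "\<exists>K. \<forall>i\<in>I. mok T i0 L B K (f i)"
  using assms
proof (induction I rule: finite_induct)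
  case empty then show ?case by auto
next
  case (insert a I)
  then obtain K where K: "\<forall>i\<in>I. mok T i0 L B K (f i)" by auto
  obtain K' where K': "mok T i0 L B K' (f a)" using insert.prems unfolding multok_def by auto
  show ?case
    using K K' by (intro exI[of _ "max K K'"]) (auto intro: mok_mono)
qed

lemma path_exit:
  assumes "E\<^sup>*\<^sup>* a b" "a \<in> S" "b \<notin> S"
  shows "\<exists>v w. v \<in> S \<and> w \<notin> S \<and> E v w"
  using assms by (induction rule: rtranclp_induct) auto

locale curvy =
  fixes E :: "'v::finite \<Rightarrow> 'v \<Rightarrow> bool" and \<Phi> :: "complex poly poly" and i0 :: 'v
    and F :: "('v \<Rightarrow> complex) set set"
  assumes conn: "\<And>j. E\<^sup>*\<^sup>* i0 j"
    and nz: "\<And>a. map_poly (\<lambda>c. poly c a) \<Phi> \<noteq> 0"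
    and F_up: "\<And>X X'. X \<in> F \<Longrightarrow> X \<subseteq> X' \<Longrightarrow> X' \<in> F"
    and F_int: "\<And>X X'. X \<in> F \<Longrightarrow> X' \<in> F \<Longrightarrow> X \<inter> X' \<in> F"
    and F_W: "W_var E \<Phi> \<in> F"
    and F_empty: "{} \<notin> F"
    and F_prime: "\<And>f g. f \<in> poly_fun \<Longrightarrow> g \<in> poly_fun \<Longrightarrow> {u. f u * g u = 0} \<in> F \<Longrightarrow>
                    {u. f u = 0} \<in> F \<or> {u. g u = 0} \<in> F"
begin

abbreviation "W \<equiv> W_var E \<Phi>"

lemma F_Inter:
  assumes "finite I" "\<And>i. i \<in> I \<Longrightarrow> X i \<in> F"
  shows "W \<inter> (\<Inter>i\<in>I. X i) \<in> F"
  using assms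
proof (induction I rule: finite_induct)
  case empty then show ?case using F_W by simp
next
  case (insert a I)
  have "W \<inter> (\<Inter>i\<in>insert a I. X i) = X a \<inter> (W \<inter> (\<Inter>i\<in>I. X i))" by auto
  then show ?case using insert F_int by auto
qed

definition good where
  "good T L B S \<longleftrightarrow> T \<in> F \<and> T \<subseteq> W \<and> L \<noteq> 0 \<and> finite B \<and> B \<subseteq> poly_fun \<and>
     (\<lambda>u. 1) \<in> spanT T i0 B \<and> (\<forall>j\<in>S. multok T i0 L B (\<lambda>u. u j))"

lemma alg:
  assumes g: "good T L B S" and m: "multok T i0 L B f"
  shows "\<exists>R. R \<noteq> 0 \<and> (\<forall>u\<in>T. eval2 R (u i0) (f u) = 0)"
proof -
  obtain k where mk: "mok T i0 L B k f" using m unfolding multok_def by auto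
  have mkj: "mok T i0 L B (k * j) (\<lambda>u. f u ^ j)" for j
  proof (induction j)
    case 0 then show ?case using mok_const[of T i0 L B 1] by simp
  next
    case (Suc j)
    from mok_mult[OF mk Suc] show ?case by simp
  qed
  have one: "(\<lambda>u. 1) \<in> spanT T i0 B" and fB: "finite B" using g unfolding good_def by auto
  have "\<forall>j. \<exists>p. \<forall>u\<in>T. poly L (u i0) ^ (k * j) * f u ^ j = (\<Sum>e\<in>B. poly (p e) (u i0) * e u)"
  proof
    fix j
    have "(\<lambda>u. poly L (u i0) ^ (k * j) * f u ^ j * 1) \<in> spanT T i0 B" by (rule mok_span[OF mkj one])
    then show "\<exists>p. \<forall>u\<in>T. poly L (u i0) ^ (k * j) * f u ^ j = (\<Sum>e\<in>B. poly (p e) (u i0) * e u)"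
      unfolding spanT_def by simp
  qed
  from choice[OF this] obtain P where P0: "\<forall>j. \<forall>u\<in>T. poly L (u i0) ^ (k * j) * f u ^ j = (\<Sum>e\<in>B. poly (P j e) (u i0) * e u)"
    by blast
  have P: "\<And>j u. u \<in> T \<Longrightarrow> poly L (u i0) ^ (k * j) * f u ^ j = (\<Sum>e\<in>B. poly (P j e) (u i0) * e u)"
    using P0 by blast
  define m where "m = card B"
  have "card B < card {..m}" unfolding m_def by simp
  from dep_lemma[OF fB _ this, of P] obtain l where
    l: "\<exists>j\<in>{..m}. l j \<noteq> 0" "\<forall>e\<in>B. (\<Sum>j\<in>{..m}. l j * P j e) = 0" by auto
  define R where "R = (\<Sum>j\<le>m. monom (l j * L ^ (k * j)) j)"
  have cR: "coeff R i = (if i \<le> m then l i * L ^ (k * i) else 0)" for i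
    unfolding R_def by (simp add: coeff_sum coeff_monom)
  have dR: "degree R \<le> m"
    by (rule degree_le) (auto simp: cR)
  show ?thesis
  proof (intro exI[of _ R] conjI ballI)
    from l(1) obtain j where "j \<le> m" "l j \<noteq> 0" by auto
    then have "coeff R j \<noteq> 0" using g unfolding cR good_def by auto
    then show "R \<noteq> 0" by auto
    fix u assume u: "u \<in> T"
    have "eval2 R (u i0) (f u) = (\<Sum>j\<le>m. poly (l j) (u i0) * (poly L (u i0) ^ (k * j) * f u ^ j))"
      unfolding eval2_sum_le[OF dR] by (rule sum.cong) (simp_all add: cR poly_power mult.assoc)
    also have "\<dots> = (\<Sum>j\<le>m. \<Sum>e\<in>B. poly (l j) (u i0) * (poly (P j e) (u i0) * e u))"
      by (simp add: P[OF u] sum_distrib_left)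
    also have "\<dots> = (\<Sum>e\<in>B. \<Sum>j\<le>m. poly (l j) (u i0) * (poly (P j e) (u i0) * e u))"
      by (rule sum.swap)
    also have "\<dots> = (\<Sum>e\<in>B. poly (\<Sum>j\<le>m. l j * P j e) (u i0) * e u)"
      by (simp add: poly_sum sum_distrib_right mult.assoc)
    also have "\<dots> = 0" using l(2) by simp
    finally show "eval2 R (u i0) (f u) = 0" .
  qed
qed

lemma minrel:
  assumes "f \<in> poly_fun" "{u. f u = 0} \<notin> F" "R \<noteq> 0" "{u. eval2 R (u i0) (f u) = 0} \<in> F"
  shows "\<exists>R'. coeff R' 0 \<noteq> 0 \<and> {u. eval2 R' (u i0) (f u) = 0} \<in> F"
  using assms(3,4)
proof (induction "degree R" arbitrary: R rule: less_induct)
  case less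
  show ?case
  proof (cases "coeff R 0 = 0")
    case False then show ?thesis using less.prems by auto
  next
    case True
    obtain a Q where R: "R = pCons a Q" by (cases R) auto
    have a: "a = 0" using True R by simp
    have Q0: "Q \<noteq> 0" using less.prems(1) R a by auto
    have dQ: "degree Q < degree R" using Q0 R a by simp
    have "{u. f u * eval2 Q (u i0) (f u) = 0} \<in> F"
      using less.prems(2) unfolding R a eval2_pCons0 .
    then have "{u. f u = 0} \<in> F \<or> {u. eval2 Q (u i0) (f u) = 0} \<in> F"
      by (intro F_prime assms(1) pf_eval2 pf_var)
    then have "{u. eval2 Q (u i0) (f u) = 0} \<in> F" using assms(2) by auto
    then show ?thesis using less.hyps[OF dQ Q0] by auto
  qed
qed

end


context curvy
begin

lemma ext:
  assumes g: "good T L B S" and vS: "v \<in> S" and Evw: "E v w"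
  shows "\<exists>T' L' B'. good T' L' B' (insert w S)"
proof -
  from g have TF: "T \<in> F" and TW: "T \<subseteq> W" and L0: "L \<noteq> 0" and fB: "finite B"
    and BP: "B \<subseteq> poly_fun" and one: "(\<lambda>u. 1) \<in> spanT T i0 B"
    and mS: "\<forall>j\<in>S. multok T i0 L B (\<lambda>u. u j)"
    unfolding good_def by auto
  define D where "D = degree \<Phi>"
  define \<phi> where "\<phi> = (\<lambda>i. coeff \<Phi> i)"
  define NN where "NN = {i. i \<le> D \<and> {u. poly (\<phi> i) (u v) = 0} \<notin> F}"
  have NNne: "NN \<noteq> {}"
  proof
    assume "NN = {}"
    then have "\<And>i. i \<in> {..D} \<Longrightarrow> {u. poly (\<phi> i) (u v) = 0} \<in> F" unfolding NN_def by auto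
    then have "W \<inter> (\<Inter>i\<in>{..D}. {u. poly (\<phi> i) (u v) = 0}) \<in> F" by (intro F_Inter) auto
    then have "W \<inter> (\<Inter>i\<in>{..D}. {u. poly (\<phi> i) (u v) = 0}) \<noteq> {}" using F_empty by metis
    then obtain u where u: "\<And>i. i \<le> D \<Longrightarrow> poly (\<phi> i) (u v) = 0" by blast
    have "map_poly (\<lambda>c. poly c (u v)) \<Phi> = 0"
    proof (rule poly_eqI)
      fix i
      show "coeff (map_poly (\<lambda>c. poly c (u v)) \<Phi>) i = coeff 0 i"
      proof (cases "i \<le> D")
        case True then show ?thesis using u[OF True] by (simp add: coeff_map_poly \<phi>_def)
      next
        case False then show ?thesis by (simp add: coeff_map_poly D_def coeff_eq_0)
      qed
    qed
    with nz show False by blast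
  qed
  have fNN: "finite NN" unfolding NN_def by auto
  define k where "k = Max NN"
  have kNN: "k \<in> NN" unfolding k_def by (rule Max_in[OF fNN NNne])
  have kD: "k \<le> D" using kNN unfolding NN_def by auto
  have above: "{u. poly (\<phi> i) (u v) = 0} \<in> F" if "i \<in> {k<..D}" for i
  proof (rule ccontr)
    assume "{u. poly (\<phi> i) (u v) = 0} \<notin> F"
    then have "i \<in> NN" using that unfolding NN_def by auto
    then have "i \<le> k" unfolding k_def using fNN by simp
    then show False using that by auto
  qed
  define T1 where "T1 = W \<inter> (\<Inter>i\<in>{k<..D}. {u. poly (\<phi> i) (u v) = 0})"
  have T1F: "T1 \<in> F" unfolding T1_def by (intro F_Inter above) auto
  have rel: "(\<Sum>i\<le>k. poly (\<phi> i) (u v) * u w ^ i) = 0" if u: "u \<in> T1" for u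
  proof -
    have uW: "u \<in> W" using u unfolding T1_def by auto
    have z: "poly (\<phi> i) (u v) = 0" if "i \<in> {k<..D}" for i using u that unfolding T1_def by auto
    have "0 = eval2 \<Phi> (u v) (u w)" using uW Evw unfolding W_var_def by auto
    also have "\<dots> = (\<Sum>i\<le>D. poly (\<phi> i) (u v) * u w ^ i)" unfolding eval2_sum \<phi>_def D_def ..
    also have "{..D} = {..k} \<union> {k<..D}" using kD by auto
    also have "(\<Sum>i\<in>{..k} \<union> {k<..D}. poly (\<phi> i) (u v) * u w ^ i) =
        (\<Sum>i\<le>k. poly (\<phi> i) (u v) * u w ^ i) + (\<Sum>i\<in>{k<..D}. poly (\<phi> i) (u v) * u w ^ i)"
      by (rule sum.union_disjoint) auto
    also have "(\<Sum>i\<in>{k<..D}. poly (\<phi> i) (u v) * u w ^ i) = 0" using z by simp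
    finally show ?thesis by simp
  qed
  have k0: "k \<noteq> 0"
  proof
    assume "k = 0"
    then have "T1 \<subseteq> {u. poly (\<phi> 0) (u v) = 0}" using rel by auto
    then have "{u. poly (\<phi> 0) (u v) = 0} \<in> F" using T1F F_up by blast
    then show False using kNN \<open>k = 0\<close> unfolding NN_def by auto
  qed
  define q where "q = (\<lambda>u::'v \<Rightarrow> complex. poly (\<phi> k) (u v))"
  have qP: "q \<in> poly_fun" unfolding q_def by (intro pf_poly pf_var)
  have qN: "{u. q u = 0} \<notin> F" using kNN unfolding NN_def q_def by auto
  have mv: "multok T i0 L B (\<lambda>u. u v)" using mS vS by auto
  have mq: "multok T i0 L B q" unfolding q_def by (rule multok_poly[OF mv])
  from alg[OF g mq] obtain R where R0: "R \<noteq> 0" and R: "\<forall>u\<in>T. eval2 R (u i0) (q u) = 0" by auto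
  have "T \<subseteq> {u. eval2 R (u i0) (q u) = 0}" using R by auto
  then have "{u. eval2 R (u i0) (q u) = 0} \<in> F" using TF F_up by blast
  from minrel[OF qP qN R0 this] obtain R' where c0: "coeff R' 0 \<noteq> 0"
    and R'F: "{u. eval2 R' (u i0) (q u) = 0} \<in> F" by auto
  obtain c0 Q where R': "R' = pCons c0 Q" by (cases R') auto
  have c00: "c0 \<noteq> 0" using c0 R' by simp
  define \<psi> where "\<psi> = (\<lambda>u. eval2 Q (u i0) (q u))"
  define T' where "T' = T \<inter> (T1 \<inter> {u. eval2 R' (u i0) (q u) = 0})"
  have T'F: "T' \<in> F" unfolding T'_def using TF T1F R'F F_int by auto
  have T'T: "T' \<subseteq> T" unfolding T'_def by auto
  have T'W: "T' \<subseteq> W" using T'T TW by auto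
  have relq: "poly c0 (u i0) + q u * \<psi> u = 0" if "u \<in> T'" for u
    using that unfolding T'_def R' \<psi>_def by (simp add: eval2_pCons)
  have rel': "q u * u w ^ k + (\<Sum>i<k. poly (\<phi> i) (u v) * u w ^ i) = 0" if "u \<in> T'" for u
  proof -
    have "u \<in> T1" using that unfolding T'_def by auto
    from rel[OF this] show ?thesis unfolding q_def
      by (simp add: lessThan_Suc_atMost[symmetric] add.commute)
  qed
  define gg where "gg = (\<lambda>u::'v \<Rightarrow> complex. u w)"
  define B' where "B' = (\<lambda>(e, b). \<lambda>u. e u * gg u ^ b) ` (B \<times> {..<k})"
  define L' where "L' = L * c0"
  have fB': "finite B'" unfolding B'_def using fB by auto
  have B'P: "B' \<subseteq> poly_fun" unfolding B'_def gg_def using BP by (auto intro!: pf_mult pf_pow pf_var)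
  have L'0: "L' \<noteq> 0" unfolding L'_def using L0 c00 by auto
  have TL: "(\<lambda>u. gg u ^ b * s u) \<in> spanT T' i0 B'" if s: "s \<in> spanT T' i0 B" and b: "b < k" for s b
  proof (rule span_linear[OF fB s])
    fix e assume e: "e \<in> B"
    then have "(\<lambda>u. e u * gg u ^ b) \<in> B'" unfolding B'_def using b by force
    then have "(\<lambda>u. e u * gg u ^ b) \<in> spanT T' i0 B'" by (rule span_gen[OF fB'])
    then show "(\<lambda>u. gg u ^ b * e u) \<in> spanT T' i0 B'" by (rule span_cong) (simp add: mult.commute)
  qed
  have one': "(\<lambda>u. 1) \<in> spanT T' i0 B'"
  proof -
    have "(\<lambda>u. 1) \<in> spanT T' i0 B" by (rule span_mono[OF T'T one])
    from TL[OF this, of 0] k0 have "(\<lambda>u. gg u ^ 0 * 1) \<in> spanT T' i0 B'" by blast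
    then show ?thesis by simp
  qed
  have B'E: "\<exists>e b. e \<in> B \<and> b < k \<and> e' = (\<lambda>u. e u * gg u ^ b)" if "e' \<in> B'" for e'
    using that unfolding B'_def by auto
  have mold: "multok T' i0 L' B' (\<lambda>u. u j)" if j: "j \<in> S" for j
  proof -
    have "multok T i0 L B (\<lambda>u. u j)" using mS j by auto
    then have "multok T' i0 L B (\<lambda>u. u j)" using T'T by (rule multok_shrink)
    then obtain kj where kj: "mok T' i0 L B kj (\<lambda>u. u j)" unfolding multok_def by auto
    have "mok T' i0 L' B' kj (\<lambda>u. u j)"
    proof (rule mok_gen[OF fB'])
      fix e' assume "e' \<in> B'"
      then obtain e b where e: "e \<in> B" "b < k" "e' = (\<lambda>u. e u * gg u ^ b)" using B'E by blast
      have "(\<lambda>u. poly L (u i0) ^ kj * u j * e u) \<in> spanT T' i0 B"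
        by (rule mok_span[OF kj span_gen[OF fB e(1)]])
      from TL[OF this e(2)]
      have "(\<lambda>u. poly (c0 ^ kj) (u i0) * (gg u ^ b * (poly L (u i0) ^ kj * u j * e u))) \<in> spanT T' i0 B'"
        by (rule span_smult)
      then show "(\<lambda>u. poly L' (u i0) ^ kj * u j * e' u) \<in> spanT T' i0 B'"
        by (rule span_cong) (simp add: e(3) L'_def poly_power power_mult_distrib mult_ac)
    qed
    then show ?thesis unfolding multok_def by auto
  qed
  have mnew: "multok T' i0 L' B' gg"
  proof -
    have mv': "multok T' i0 L B (\<lambda>u. u v)" using mv T'T by (rule multok_shrink)
    have mphi: "multok T' i0 L B (\<lambda>u. poly (\<phi> i) (u v))" for i by (rule multok_poly[OF mv'])
    have mq': "multok T' i0 L B q" unfolding q_def by (rule mphi)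
    have mpsi: "multok T' i0 L B \<psi>" unfolding \<psi>_def by (rule multok_eval2[OF mq'])
    obtain K1 where K1: "\<forall>i\<in>{..<k}. mok T' i0 L B K1 (\<lambda>u. poly (\<phi> i) (u v))"
      using finite_mok[of "{..<k}" T' i0 L B "\<lambda>i u. poly (\<phi> i) (u v)"] mphi by auto
    obtain K2 where K2: "mok T' i0 L B K2 \<psi>" using mpsi unfolding multok_def by auto
    define K where "K = max K1 K2"
    have KP: "mok T' i0 L B K (\<lambda>u. poly (\<phi> i) (u v))" if "i < k" for i
      using K1 that mok_mono[of T' i0 L B K1 _ K] unfolding K_def by auto
    have KQ: "mok T' i0 L B K \<psi>" using mok_mono[OF K2, of K] unfolding K_def by auto
    have "mok T' i0 L' B' (2 * K + 1) gg"
    proof (rule mok_gen[OF fB'])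
      fix e' assume "e' \<in> B'"
      then obtain e b where e: "e \<in> B" "b < k" "e' = (\<lambda>u. e u * gg u ^ b)" using B'E by blast
      have eS: "e \<in> spanT T' i0 B" by (rule span_gen[OF fB e(1)])
      show "(\<lambda>u. poly L' (u i0) ^ (2 * K + 1) * gg u * e' u) \<in> spanT T' i0 B'"
      proof (cases "b + 1 < k")
        case True
        from TL[OF eS True]
        have "(\<lambda>u. poly (L' ^ (2 * K + 1)) (u i0) * (gg u ^ (b + 1) * e u)) \<in> spanT T' i0 B'"
          by (rule span_smult)
        then show ?thesis by (rule span_cong) (simp add: e(3) poly_power mult_ac)
      next
        case False
        then have bk: "b + 1 = k" using e(2) by auto
        define s where "s = (\<lambda>i u. poly L (u i0) ^ K * \<psi> u * (poly L (u i0) ^ K * poly (\<phi> i) (u v) * e u))"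
        have sS: "s i \<in> spanT T' i0 B" if "i < k" for i
          unfolding s_def by (rule mok_span[OF KQ mok_span[OF KP[OF that] eS]])
        have "(\<lambda>u. \<Sum>i\<in>{..<k}. gg u ^ i * s i u) \<in> spanT T' i0 B'"
          by (rule span_sum) (auto intro: TL sS)
        then have "(\<lambda>u. poly (L * c0 ^ (2 * K)) (u i0) * (\<Sum>i\<in>{..<k}. gg u ^ i * s i u)) \<in> spanT T' i0 B'"
          by (rule span_smult)
        then show ?thesis
        proof (rule span_cong)
          fix u assume u: "u \<in> T'"
          define X where "X = poly L (u i0)"
          define C where "C = poly c0 (u i0)"
          have C: "C = - (q u * \<psi> u)" using relq[OF u] unfolding C_def by (simp add: eq_neg_iff_add_eq_0)
          have S: "(\<Sum>i<k. poly (\<phi> i) (u v) * u w ^ i) = - (q u * u w ^ k)"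
            using rel'[OF u] by (simp add: eq_neg_iff_add_eq_0 add.commute)
          have "(\<Sum>i\<in>{..<k}. gg u ^ i * s i u) = X ^ K * X ^ K * \<psi> u * e u * (\<Sum>i<k. poly (\<phi> i) (u v) * u w ^ i)"
            unfolding s_def gg_def X_def by (simp add: sum_distrib_left mult_ac)
          also have "\<dots> = X ^ K * X ^ K * C * e u * u w ^ k"
            unfolding S C by (simp add: mult_ac)
          finally have "poly (L * c0 ^ (2 * K)) (u i0) * (\<Sum>i\<in>{..<k}. gg u ^ i * s i u) =
              X * C ^ (2 * K) * (X ^ K * X ^ K * C * e u * u w ^ k)"
            unfolding X_def C_def by (simp add: poly_power)
          also have "\<dots> = (X * C) ^ (2 * K + 1) * e u * u w ^ k"
          proof -
            have p: "X ^ K * X ^ K = X ^ (2 * K)" by (simp add: mult_2 power_add)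
            have "(X * C) ^ (2 * K + 1) = (X * X ^ (2 * K)) * (C * C ^ (2 * K))"
              by (simp add: power_mult_distrib)
            then show ?thesis unfolding p by (simp only: mult_ac)
          qed
          also have "\<dots> = poly L' (u i0) ^ (2 * K + 1) * gg u * e' u"
            unfolding X_def C_def L'_def e(3) gg_def using bk[symmetric]
            by (simp add: mult_ac)
          finally show "poly L' (u i0) ^ (2 * K + 1) * gg u * e' u =
              poly (L * c0 ^ (2 * K)) (u i0) * (\<Sum>i\<in>{..<k}. gg u ^ i * s i u)" by simp
        qed
      qed
    qed
    then show ?thesis unfolding multok_def by auto
  qed
  have "good T' L' B' (insert w S)"
    unfolding good_def using T'F T'W L'0 fB' B'P one' mold mnew unfolding gg_def by auto
  then show ?thesis by blast
qed

end


context curvy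
begin

lemma good_base: "good W 1 {(\<lambda>u. 1)} {i0}"
  unfolding good_def
proof (intro conjI)
  show "(\<lambda>u. 1) \<in> spanT W i0 {(\<lambda>u. 1)}" by (rule span_gen) auto
  show "{(\<lambda>u. 1)} \<subseteq> poly_fun" using pf_const by auto
  show "\<forall>j\<in>{i0}. multok W i0 1 {(\<lambda>u. 1)} (\<lambda>u. u j)" using multok_x by auto
qed (use F_W in auto)

lemma good_all: "\<exists>T L B. good T L B UNIV"
proof -
  have "\<exists>S T L B. good T L B S \<and> i0 \<in> S \<and> min n (card (UNIV :: 'v set)) \<le> card S" for n
  proof (induction n)
    case 0 then show ?case using good_base by (intro exI[of _ "{i0}"] exI[of _ W] exI[of _ 1] exI[of _ "{(\<lambda>u. 1)}"]) auto
  next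
    case (Suc n)
    then obtain S T L B where g: "good T L B S" "i0 \<in> S" "min n (card (UNIV :: 'v set)) \<le> card S" by blast
    show ?case
    proof (cases "S = UNIV")
      case True then show ?thesis using g by (intro exI[of _ S]) auto
    next
      case False
      then obtain w0 where "w0 \<notin> S" by auto
      from path_exit[OF conn[of w0] g(2) this] obtain v w where vw: "v \<in> S" "w \<notin> S" "E v w" by blast
      from ext[OF g(1) vw(1) vw(3)] obtain T' L' B' where g': "good T' L' B' (insert w S)" by blast
      have "card (insert w S) = Suc (card S)" using vw(2) by simp
      then show ?thesis using g' g(2,3) by (intro exI[of _ "insert w S"]) auto
    qed
  qed
  from this[of "card (UNIV :: 'v set)"] obtain S T L B where g: "good T L B S" "card (UNIV :: 'v set) \<le> card S" by auto
  have "S = UNIV" by (rule card_seteq) (use g in auto)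
  then show ?thesis using g by blast
qed

lemma FT1: "\<exists>T L B. T \<in> F \<and> T \<subseteq> W \<and> L \<noteq> 0 \<and> finite B \<and> B \<subseteq> poly_fun \<and>
   (\<forall>f\<in>poly_fun. \<exists>k p. \<forall>u\<in>T. poly L (u i0) ^ k * f u = (\<Sum>e\<in>B. poly (p e) (u i0) * e u))"
proof -
  obtain T L B where g: "good T L B UNIV" using good_all by blast
  have rest: "\<exists>k p. \<forall>u\<in>T. poly L (u i0) ^ k * f u = (\<Sum>e\<in>B. poly (p e) (u i0) * e u)"
    if f: "f \<in> poly_fun" for f
  proof -
    have "multok T i0 L B f" using f g unfolding good_def by (auto intro!: multok_pf[OF f])
    then obtain k where k: "mok T i0 L B k f" unfolding multok_def by auto
    have "(\<lambda>u. poly L (u i0) ^ k * f u * 1) \<in> spanT T i0 B"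
      using g unfolding good_def by (intro mok_span[OF k]) auto
    then show ?thesis unfolding spanT_def by auto
  qed
  show ?thesis using g rest unfolding good_def by blast
qed

lemma FT2:
  assumes "f \<in> poly_fun" "{u. f u = 0} \<notin> F"
  shows "\<exists>R. coeff R 0 \<noteq> 0 \<and> {u. eval2 R (u i0) (f u) = 0} \<in> F"
proof -
  obtain T L B where g: "good T L B UNIV" using good_all by blast
  have "multok T i0 L B f" using g unfolding good_def by (auto intro!: multok_pf[OF assms(1)])
  from alg[OF g this] obtain R where R: "R \<noteq> 0" "\<forall>u\<in>T. eval2 R (u i0) (f u) = 0" by auto
  have "T \<subseteq> {u. eval2 R (u i0) (f u) = 0}" using R by auto
  then have "{u. eval2 R (u i0) (f u) = 0} \<in> F" using g F_up unfolding good_def by blast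
  from minrel[OF assms R(1) this] show ?thesis .
qed

end


lemma nz_of_standard:
  assumes "standard2 \<Phi>"
  shows "map_poly (\<lambda>c. poly c a) \<Phi> \<noteq> 0"
proof
  assume z: "map_poly (\<lambda>c. poly c a) \<Phi> = 0"
  define p :: "complex poly" where "p = [:- a, 1:]"
  have dv: "p dvd coeff \<Phi> i" for i
  proof -
    have "coeff (map_poly (\<lambda>c. poly c a) \<Phi>) i = 0" using z by simp
    then have "poly (coeff \<Phi> i) a = 0" by (simp add: coeff_map_poly)
    then show ?thesis unfolding p_def by (simp add: poly_eq_0_iff_dvd)
  qed
  define Q where "Q = map_poly (\<lambda>c. c div p) \<Phi>"
  have "\<Phi> = [:p:] * Q"
  proof (rule poly_eqI)
    fix i
    show "coeff \<Phi> i = coeff ([:p:] * Q) i"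
      unfolding Q_def using dv[of i] by (simp add: coeff_map_poly)
  qed
  then have "[:p:] dvd \<Phi>" by (rule dvdI)
  moreover have "degree p > 0" unfolding p_def by simp
  ultimately show False using assms unfolding standard2_def by blast
qed

lemma fiber_finite:
  assumes conn: "\<And>j. E\<^sup>*\<^sup>* i0 j" and nz: "\<And>a. map_poly (\<lambda>c. poly c a) \<Phi> \<noteq> 0"
  shows "finite {u \<in> W_var E \<Phi>. (u :: 'v::finite \<Rightarrow> complex) i0 = a}"
proof -
  have "\<exists>Fj. finite Fj \<and> (\<forall>u\<in>W_var E \<Phi>. u i0 = a \<longrightarrow> u j \<in> Fj)" for j
    using conn[of j]
  proof (induction rule: rtranclp_induct)
    case base then show ?case by (intro exI[of _ "{a}"]) auto
  next
    case (step j k)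
    then obtain Fj where Fj: "finite Fj" "\<forall>u\<in>W_var E \<Phi>. u i0 = a \<longrightarrow> u j \<in> Fj" by blast
    define Fk where "Fk = (\<Union>b\<in>Fj. {c. poly (map_poly (\<lambda>c. poly c b) \<Phi>) c = 0})"
    have "finite Fk" unfolding Fk_def using Fj(1) by (intro finite_UN_I poly_roots_finite nz)
    moreover have "\<forall>u\<in>W_var E \<Phi>. u i0 = a \<longrightarrow> u k \<in> Fk"
    proof (intro ballI impI)
      fix u assume u: "u \<in> W_var E \<Phi>" "u i0 = a"
      then have "u j \<in> Fj" using Fj by auto
      moreover have "eval2 \<Phi> (u j) (u k) = 0" using u(1) step(2) unfolding W_var_def by auto
      ultimately show "u k \<in> Fk" unfolding Fk_def eval2_def by auto
    qed
    ultimately show ?case by blast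
  qed
  then obtain FF where FF: "\<And>j. finite (FF j)" "\<And>j. \<forall>u\<in>W_var E \<Phi>. u i0 = a \<longrightarrow> u j \<in> FF j"
    by metis
  have "{u \<in> W_var E \<Phi>. u i0 = a} \<subseteq> Pi\<^sub>E UNIV FF" using FF(2) by (auto simp: PiE_UNIV_domain)
  moreover have "finite (Pi\<^sub>E UNIV FF)" by (rule finite_PiE) (auto simp: FF(1))
  ultimately show ?thesis by (rule finite_subset)
qed

lemma finite_zeros_x:
  assumes conn: "\<And>j. E\<^sup>*\<^sup>* i0 j" and nz: "\<And>a. map_poly (\<lambda>c. poly c a) \<Phi> \<noteq> 0" and c: "c \<noteq> 0"
  shows "finite {u \<in> W_var E \<Phi>. poly c ((u :: 'v::finite \<Rightarrow> complex) i0) = 0}"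
proof -
  have "{u \<in> W_var E \<Phi>. poly c (u i0) = 0} = (\<Union>a\<in>{a. poly c a = 0}. {u \<in> W_var E \<Phi>. u i0 = a})" by auto
  also have "finite \<dots>" using poly_roots_finite[OF c] fiber_finite[OF conn nz] by auto
  finally show ?thesis .
qed

lemma curve:
  assumes conn: "\<And>i j. E\<^sup>*\<^sup>* i j" and nz: "\<And>a. map_poly (\<lambda>c. poly c a) \<Phi> \<noteq> 0"
    and Yi: "zariski_irreducible Y" and YW: "Y \<subseteq> W_var E \<Phi>"
    and Zc: "zariski_closed Z" and nsub: "\<not> Y \<subseteq> Z"
  shows "finite (Y \<inter> (Z :: ('v::finite \<Rightarrow> complex) set))"
proof -
  define i0 :: 'v where "i0 = undefined"
  interpret curvy E \<Phi> i0 "{X. Y \<subseteq> X}"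
  proof
    show "E\<^sup>*\<^sup>* i0 j" for j by (rule conn)
    show "map_poly (\<lambda>c. poly c a) \<Phi> \<noteq> 0" for a by (rule nz)
    show "W_var E \<Phi> \<in> {X. Y \<subseteq> X}" using YW by auto
    show "{} \<notin> {X. Y \<subseteq> X}" using Yi unfolding zariski_irreducible_def by auto
    fix f g :: "('v \<Rightarrow> complex) \<Rightarrow> complex"
    assume f: "f \<in> poly_fun" and g: "g \<in> poly_fun" and fg: "{u. f u * g u = 0} \<in> {X. Y \<subseteq> X}"
    have "Y \<subseteq> {u. f u = 0} \<union> {u. g u = 0}" using fg by auto
    then show "{u. f u = 0} \<in> {X. Y \<subseteq> X} \<or> {u. g u = 0} \<in> {X. Y \<subseteq> X}"
      using Yi closed_single_fun[OF f] closed_single_fun[OF g] unfolding zariski_irreducible_def by auto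
  qed auto
  obtain S where S: "S \<subseteq> poly_fun" "Z = zero_set S" using Zc unfolding zariski_closed_def by auto
  from nsub obtain f p where f: "f \<in> S" "p \<in> Y" "f p \<noteq> 0" unfolding S zero_set_def by auto
  have fP: "f \<in> poly_fun" using f S by auto
  have "{u. f u = 0} \<notin> {X. Y \<subseteq> X}" using f by auto
  from FT2[OF fP this] obtain R where R: "coeff R 0 \<noteq> 0" "Y \<subseteq> {u. eval2 R (u i0) (f u) = 0}" by auto
  have "Y \<inter> Z \<subseteq> {u \<in> W_var E \<Phi>. poly (coeff R 0) (u i0) = 0}"
  proof
    fix u assume u: "u \<in> Y \<inter> Z"
    then have "f u = 0" using f S unfolding zero_set_def by auto
    then show "u \<in> {u \<in> W_var E \<Phi>. poly (coeff R 0) (u i0) = 0}"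
      using u R(2) YW by (auto simp: eval2_at0)
  qed
  moreover have "finite {u \<in> W_var E \<Phi>. poly (coeff R 0) (u i0) = 0}"
    by (rule finite_zeros_x[OF conn nz R(1)])
  ultimately show ?thesis by (rule finite_subset)
qed


definition fipinf :: "'a set set \<Rightarrow> bool" where
  "fipinf G \<longleftrightarrow> (\<forall>Y. finite Y \<longrightarrow> Y \<subseteq> G \<longrightarrow> infinite (\<Inter>Y))"

definition ultra :: "'a set set \<Rightarrow> bool" where
  "ultra U \<longleftrightarrow> (\<forall>X Y. X \<in> U \<longrightarrow> X \<subseteq> Y \<longrightarrow> Y \<in> U) \<and> (\<forall>X Y. X \<in> U \<longrightarrow> Y \<in> U \<longrightarrow> X \<inter> Y \<in> U) \<and>
     {} \<notin> U \<and> (\<forall>X. X \<in> U \<or> - X \<in> U)"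

lemma fipinf_insert:
  assumes "fipinf M" "\<And>Y. finite Y \<Longrightarrow> Y \<subseteq> M \<Longrightarrow> infinite (\<Inter>Y \<inter> X)"
  shows "fipinf (insert X M)"
  unfolding fipinf_def
proof (intro allI impI)
  fix Y assume Y: "finite Y" "Y \<subseteq> insert X M"
  have "\<Inter>(Y - {X}) \<inter> X \<subseteq> \<Inter>Y" by auto
  moreover have "infinite (\<Inter>(Y - {X}) \<inter> X)" using Y by (intro assms(2)) auto
  ultimately show "infinite (\<Inter>Y)" using finite_subset by blast
qed

lemma ultra_exists:
  fixes X0 :: "'a set set"
  assumes fip: "fipinf X0"
  shows "\<exists>U. ultra U \<and> X0 \<subseteq> U \<and> (\<forall>X. finite X \<longrightarrow> - X \<in> U)"
proof -
  define cof :: "'a set set" where "cof = {- X | X. finite X}"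
  define A where "A = {G. X0 \<union> cof \<subseteq> G \<and> fipinf G}"
  have G0: "X0 \<union> cof \<in> A"
    unfolding A_def
  proof (safe)
    show "fipinf (X0 \<union> cof)" unfolding fipinf_def
    proof (intro allI impI)
      fix Y assume Y: "finite Y" "Y \<subseteq> X0 \<union> cof"
      define K where "K = \<Union>((\<lambda>X. - X) ` (Y \<inter> cof))"
      have "finite K" unfolding K_def using Y(1) by (auto simp: cof_def)
      have "infinite (\<Inter>(Y \<inter> X0))" using fip Y unfolding fipinf_def by auto
      then have i: "infinite (\<Inter>(Y \<inter> X0) - K)" using \<open>finite K\<close> by auto
      have "\<Inter>(Y \<inter> X0) - K \<subseteq> \<Inter>Y"
      proof
        fix x assume x: "x \<in> \<Inter>(Y \<inter> X0) - K"
        show "x \<in> \<Inter>Y"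
        proof
          fix Z assume "Z \<in> Y"
          then have "Z \<in> X0 \<or> Z \<in> cof" using Y by auto
          then show "x \<in> Z"
          proof
            assume "Z \<in> X0" then show ?thesis using x \<open>Z \<in> Y\<close> by auto
          next
            assume "Z \<in> cof" then have "- Z \<subseteq> K" using \<open>Z \<in> Y\<close> unfolding K_def by auto
            then show ?thesis using x by auto
          qed
        qed
      qed
      then show "infinite (\<Inter>Y)" using i finite_subset by blast
    qed
  qed
  have "\<exists>M\<in>A. \<forall>X\<in>A. M \<subseteq> X \<longrightarrow> X = M"
  proof (rule Zorn_Lemma2, intro ballI)
    fix C assume C: "C \<in> chains A"
    show "\<exists>U\<in>A. \<forall>X\<in>C. X \<subseteq> U"
    proof (cases "C = {}")
      case True then show ?thesis using G0 by auto
    next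
      case False
      have CA: "C \<subseteq> A" using C unfolding chains_def by auto
      have ch: "subset.chain A C" using C unfolding chains_alt_def by auto
      have "\<Union>C \<in> A" unfolding A_def
      proof (safe)
        obtain G where "G \<in> C" using False by auto
        then have "X0 \<union> cof \<subseteq> G" using CA unfolding A_def by auto
        then show "x \<in> \<Union>C" if "x \<in> X0" for x using that \<open>G \<in> C\<close> by auto
        show "x \<in> \<Union>C" if "x \<in> cof" for x using that \<open>G \<in> C\<close> \<open>X0 \<union> cof \<subseteq> G\<close> by auto
        show "fipinf (\<Union>C)" unfolding fipinf_def
        proof (intro allI impI)
          fix Y assume Y: "finite Y" "Y \<subseteq> \<Union>C"
          obtain G where G: "G \<in> C" "Y \<subseteq> G" by (rule finite_subset_Union_chain[OF Y False ch])
          then show "infinite (\<Inter>Y)" using CA Y unfolding A_def fipinf_def by auto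
        qed
      qed
      then show ?thesis by auto
    qed
  qed
  then obtain M where MA: "M \<in> A" and Mmax: "\<And>X. X \<in> A \<Longrightarrow> M \<subseteq> X \<Longrightarrow> X = M" by blast
  have fM: "fipinf M" and sub: "X0 \<union> cof \<subseteq> M" using MA unfolding A_def by auto
  have addM: "X \<in> M" if "fipinf (insert X M)" for X
  proof -
    have "insert X M \<in> A" using that sub unfolding A_def by auto
    then have "insert X M = M" using Mmax by blast
    then show ?thesis by auto
  qed
  have "ultra M" unfolding ultra_def
  proof (intro conjI allI impI)
    fix X Y assume X: "X \<in> M" and XY: "X \<subseteq> Y"
    show "Y \<in> M"
    proof (rule addM, rule fipinf_insert[OF fM])
      fix Z assume Z: "finite Z" "Z \<subseteq> M"
      have "\<Inter>(insert X Z) \<subseteq> \<Inter>Z \<inter> Y" using XY by auto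
      moreover have "infinite (\<Inter>(insert X Z))" using fM Z X unfolding fipinf_def by auto
      ultimately show "infinite (\<Inter>Z \<inter> Y)" using finite_subset by blast
    qed
  next
    fix X Y assume X: "X \<in> M" and Y: "Y \<in> M"
    show "X \<inter> Y \<in> M"
    proof (rule addM, rule fipinf_insert[OF fM])
      fix Z assume Z: "finite Z" "Z \<subseteq> M"
      have "\<Inter>(insert X (insert Y Z)) = \<Inter>Z \<inter> (X \<inter> Y)" by auto
      moreover have "infinite (\<Inter>(insert X (insert Y Z)))"
      proof -
        have "finite (insert X (insert Y Z))" "insert X (insert Y Z) \<subseteq> M" using Z X Y by auto
        then show ?thesis using fM unfolding fipinf_def by blast
      qed
      ultimately show "infinite (\<Inter>Z \<inter> (X \<inter> Y))" by simp
    qed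
  next
    show "{} \<notin> M" using fM unfolding fipinf_def by (metis Inf_insert Int_empty_left empty_subsetI
          finite.emptyI finite.insertI insert_subset)
  next
    fix X
    show "X \<in> M \<or> - X \<in> M"
    proof (rule ccontr)
      assume "\<not> (X \<in> M \<or> - X \<in> M)"
      then have n1: "\<not> fipinf (insert X M)" and n2: "\<not> fipinf (insert (- X) M)" using addM by auto
      from n1 obtain Y1 where Y1: "finite Y1" "Y1 \<subseteq> M" "finite (\<Inter>Y1 \<inter> X)"
        using fipinf_insert[OF fM, of X] by blast
      from n2 obtain Y2 where Y2: "finite Y2" "Y2 \<subseteq> M" "finite (\<Inter>Y2 \<inter> - X)"
        using fipinf_insert[OF fM, of "- X"] by blast
      have "\<Inter>(Y1 \<union> Y2) \<subseteq> (\<Inter>Y1 \<inter> X) \<union> (\<Inter>Y2 \<inter> - X)" by auto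
      moreover have "infinite (\<Inter>(Y1 \<union> Y2))" using fM Y1 Y2 unfolding fipinf_def by auto
      ultimately show False using Y1(3) Y2(3) finite_subset by blast
    qed
  qed
  moreover have "\<forall>X. finite X \<longrightarrow> - X \<in> M" using sub unfolding cof_def by auto
  ultimately show ?thesis using sub by blast
qed


lemma YF:
  assumes conn: "\<And>i j. E\<^sup>*\<^sup>* i j" and nz: "\<And>a. map_poly (\<lambda>c. poly c a) \<Phi> \<noteq> 0"
    and U: "ultra U" and WU: "W_var E \<Phi> \<in> U" and cof: "\<forall>X. finite X \<longrightarrow> - X \<in> U"
  shows "\<exists>Y. Y \<in> U \<and> zariski_closed Y \<and> zariski_irreducible Y \<and> infinite Y \<and>
     Y \<subseteq> W_var E (\<Phi> :: complex poly poly) \<and> Y \<subseteq> (UNIV :: ('v::finite \<Rightarrow> complex) set)"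
proof -
  define i0 :: 'v where "i0 = undefined"
  have Uup: "\<And>X X'. X \<in> U \<Longrightarrow> X \<subseteq> X' \<Longrightarrow> X' \<in> U" and Uint: "\<And>X X'. X \<in> U \<Longrightarrow> X' \<in> U \<Longrightarrow> X \<inter> X' \<in> U"
    and Ue: "{} \<notin> U" and Uc: "\<And>X. X \<in> U \<or> - X \<in> U" using U unfolding ultra_def by blast+
  interpret curvy E \<Phi> i0 U
  proof
    show "E\<^sup>*\<^sup>* i0 j" for j by (rule conn)
    show "map_poly (\<lambda>c. poly c a) \<Phi> \<noteq> 0" for a by (rule nz)
    fix f g :: "('v \<Rightarrow> complex) \<Rightarrow> complex"
    assume fg: "{u. f u * g u = 0} \<in> U"
    show "{u. f u = 0} \<in> U \<or> {u. g u = 0} \<in> U"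
    proof (rule ccontr)
      assume "\<not> ({u. f u = 0} \<in> U \<or> {u. g u = 0} \<in> U)"
      then have "- {u. f u = 0} \<in> U" "- {u. g u = 0} \<in> U" using Uc by auto
      then have "{u. f u * g u = 0} \<inter> (- {u. f u = 0} \<inter> - {u. g u = 0}) \<in> U" using fg Uint by auto
      moreover have "{u. f u * g u = 0} \<inter> (- {u. f u = 0} \<inter> - {u. g u = 0}) = {}" by auto
      ultimately show False using Ue by simp
    qed
  qed (use Uup Uint WU Ue in auto)
  obtain T L B where TLB: "T \<in> U" "T \<subseteq> W" "L \<noteq> 0" "finite B" "B \<subseteq> poly_fun"
    and rep: "\<And>f. f \<in> poly_fun \<Longrightarrow> \<exists>k p. \<forall>u\<in>T. poly L (u i0) ^ k * f u = (\<Sum>e\<in>B. poly (p e) (u i0) * e u)"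
    using FT1 by blast
  define I where "I = {f \<in> poly_fun. {u. f u = 0} \<in> U}"
  define hp where "hp = (\<lambda>p u. \<Sum>e\<in>B. poly (p e) (u i0) * e u)"
  have hpP: "hp p \<in> poly_fun" for p
    unfolding hp_def using TLB(4,5) by (intro pf_sum pf_mult pf_poly pf_var) auto
  define M where "M = {p. {u. hp p u = 0} \<in> U}"
  have "\<exists>G. finite G \<and> G \<subseteq> M \<and> (\<forall>p\<in>M. \<exists>l. \<forall>e\<in>B. p e = (\<Sum>g\<in>G. l g * g e))"
  proof (rule noeth_lemma[OF TLB(4)])
    fix p q assume "p \<in> M" "q \<in> M"
    then have "{u. hp p u = 0} \<inter> {u. hp q u = 0} \<in> U" unfolding M_def using Uint by auto
    moreover have "{u. hp p u = 0} \<inter> {u. hp q u = 0} \<subseteq> {u. hp (\<lambda>e. p e + q e) u = 0}"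
      unfolding hp_def by (auto simp: sum.distrib distrib_right)
    ultimately show "(\<lambda>e. p e + q e) \<in> M" unfolding M_def using Uup by auto
  next
    fix p c assume "p \<in> M"
    moreover have "{u. hp p u = 0} \<subseteq> {u. hp (\<lambda>e. c * p e) u = 0}"
      unfolding hp_def by (auto simp: sum_distrib_left[symmetric] mult.assoc)
    ultimately show "(\<lambda>e. c * p e) \<in> M" unfolding M_def using Uup by auto
  qed
  then obtain G where G: "finite G" "G \<subseteq> M" "\<And>p. p \<in> M \<Longrightarrow> \<exists>l. \<forall>e\<in>B. p e = (\<Sum>g\<in>G. l g * g e)"
    by blast
  have LU: "{u. poly L (u i0) \<noteq> 0} \<in> U"
  proof -
    have "W \<inter> - {u \<in> W. poly L (u i0) = 0} \<in> U"
      using Uint[OF WU] cof finite_zeros_x[OF conn nz TLB(3)] by auto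
    moreover have "W \<inter> - {u \<in> W. poly L (u i0) = 0} \<subseteq> {u. poly L (u i0) \<noteq> 0}" by auto
    ultimately show ?thesis using Uup by blast
  qed
  have GU: "W \<inter> (\<Inter>g\<in>G. {u. hp g u = 0}) \<in> U" using G(1,2) unfolding M_def by (intro F_Inter) auto
  define Y0 where "Y0 = T \<inter> ({u. poly L (u i0) \<noteq> 0} \<inter> (W \<inter> (\<Inter>g\<in>G. {u. hp g u = 0})))"
  have Y0U: "Y0 \<in> U" unfolding Y0_def using Uint TLB(1) LU GU by auto
  define Y where "Y = zero_set I"
  have Y0Y: "Y0 \<subseteq> Y"
  proof
    fix u assume u: "u \<in> Y0"
    show "u \<in> Y" unfolding Y_def zero_set_def
    proof (intro CollectI ballI)
      fix f assume f: "f \<in> I"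
      then have fP: "f \<in> poly_fun" and fU: "{u. f u = 0} \<in> U" unfolding I_def by auto
      obtain k p where kp: "\<forall>u\<in>T. poly L (u i0) ^ k * f u = hp p u" using rep[OF fP] unfolding hp_def by blast
      have "T \<inter> {u. f u = 0} \<subseteq> {u. hp p u = 0}" using kp by auto
      then have "p \<in> M" unfolding M_def using Uint[OF TLB(1) fU] Uup by blast
      then obtain l where l: "\<forall>e\<in>B. p e = (\<Sum>g\<in>G. l g * g e)" using G(3) by blast
      have "hp p u = (\<Sum>e\<in>B. \<Sum>g\<in>G. poly (l g) (u i0) * (poly (g e) (u i0) * e u))"
        unfolding hp_def using l by (auto simp: poly_sum sum_distrib_right mult.assoc intro!: sum.cong)
      also have "\<dots> = (\<Sum>g\<in>G. poly (l g) (u i0) * hp g u)"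
        unfolding hp_def by (subst sum.swap) (simp add: sum_distrib_left)
      also have "\<dots> = 0" using u unfolding Y0_def by auto
      finally have "poly L (u i0) ^ k * f u = 0" using kp u unfolding Y0_def by auto
      then show "f u = 0" using u unfolding Y0_def by auto
    qed
  qed
  have YU: "Y \<in> U" using Uup[OF Y0U Y0Y] .
  have Yc: "zariski_closed Y" unfolding Y_def I_def by (rule zero_set_closed) auto
  have Yinf: "infinite Y"
  proof
    assume "finite Y"
    then have "- Y \<in> U" using cof by auto
    then have "Y \<inter> - Y \<in> U" using Uint[OF YU] by blast
    then show False using Ue by simp
  qed
  have Ysub: "Y \<subseteq> A" if A: "zariski_closed A" "A \<in> U" for A
  proof -
    obtain S where S: "S \<subseteq> poly_fun" "A = zero_set S" using A(1) unfolding zariski_closed_def by auto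
    have "f \<in> I" if "f \<in> S" for f
    proof -
      have "A \<subseteq> {u. f u = 0}" using that S unfolding zero_set_def by auto
      then show ?thesis using that S A(2) Uup unfolding I_def by auto
    qed
    then show ?thesis unfolding Y_def S zero_set_def by auto
  qed
  have YW: "Y \<subseteq> W" by (rule Ysub[OF W_closed WU])
  have Yirr: "zariski_irreducible Y" unfolding zariski_irreducible_def
  proof (intro conjI allI impI)
    show "Y \<noteq> {}" using Yinf by auto
    fix A B assume AB: "zariski_closed A \<and> zariski_closed B \<and> Y \<subseteq> A \<union> B"
    show "Y \<subseteq> A \<or> Y \<subseteq> B"
    proof (rule ccontr)
      assume n: "\<not> (Y \<subseteq> A \<or> Y \<subseteq> B)"
      obtain SA where SA: "SA \<subseteq> poly_fun" "A = zero_set SA" using AB unfolding zariski_closed_def by auto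
      obtain SB where SB: "SB \<subseteq> poly_fun" "B = zero_set SB" using AB unfolding zariski_closed_def by auto
      from n obtain f p1 where f: "f \<in> SA" "p1 \<in> Y" "f p1 \<noteq> 0" unfolding SA zero_set_def by auto
      from n obtain g p2 where g: "g \<in> SB" "p2 \<in> Y" "g p2 \<noteq> 0" unfolding SB zero_set_def by auto
      have "Y \<subseteq> {u. f u * g u = 0}"
      proof
        fix u assume "u \<in> Y"
        then have "u \<in> A \<or> u \<in> B" using AB by auto
        then show "u \<in> {u. f u * g u = 0}" using f g unfolding SA SB zero_set_def by auto
      qed
      then have "{u. f u * g u = 0} \<in> U" using YU Uup by blast
      then have "{u. f u = 0} \<in> U \<or> {u. g u = 0} \<in> U" using F_prime f g SA SB by blast
      then have "f \<in> I \<or> g \<in> I" unfolding I_def using f g SA SB by auto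
      then show False using f g unfolding Y_def zero_set_def by auto
    qed
  qed
  show ?thesis using YU Yc Yirr Yinf YW by blast
qed

lemma decomp:
  assumes conn: "\<And>i j. E\<^sup>*\<^sup>* i j" and nz: "\<And>a. map_poly (\<lambda>c. poly c a) \<Phi> \<noteq> 0"
  shows "\<exists>C. finite C \<and> (\<forall>Y\<in>C. zariski_closed Y \<and> zariski_irreducible Y \<and> infinite Y \<and>
      Y \<subseteq> W_var E \<Phi>) \<and> finite (W_var E \<Phi> - \<Union>C :: ('v::finite \<Rightarrow> complex) set)"
proof (rule ccontr)
  define W where "W = (W_var E \<Phi> :: ('v \<Rightarrow> complex) set)"
  define P where "P = (\<lambda>Y. zariski_closed Y \<and> zariski_irreducible Y \<and> infinite Y \<and> Y \<subseteq> W)"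
  assume "\<not> ?thesis"
  then have H: "\<And>C. finite C \<Longrightarrow> (\<forall>Y\<in>C. P Y) \<Longrightarrow> infinite (W - \<Union>C)" unfolding P_def W_def by blast
  define X0 where "X0 = insert W ((\<lambda>Y. W - Y) ` {Y. P Y})"
  have "fipinf X0" unfolding fipinf_def
  proof (intro allI impI)
    fix Z assume Z: "finite Z" "Z \<subseteq> X0"
    have "Z - {W} \<subseteq> (\<lambda>Y. W - Y) ` {Y. P Y}" using Z unfolding X0_def by auto
    from finite_subset_image[OF _ this] Z(1) obtain C where C: "C \<subseteq> {Y. P Y}" "finite C"
      "Z - {W} = (\<lambda>Y. W - Y) ` C" by auto
    have "W - \<Union>C \<subseteq> \<Inter>Z"
    proof
      fix x assume x: "x \<in> W - \<Union>C"
      show "x \<in> \<Inter>Z"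
      proof
        fix z assume "z \<in> Z"
        show "x \<in> z"
        proof (cases "z = W")
          case True then show ?thesis using x by auto
        next
          case False
          then have "z \<in> (\<lambda>Y. W - Y) ` C" using \<open>z \<in> Z\<close> C(3) by auto
          then show ?thesis using x by auto
        qed
      qed
    qed
    moreover have "infinite (W - \<Union>C)" using H C by auto
    ultimately show "infinite (\<Inter>Z)" using finite_subset by blast
  qed
  from ultra_exists[OF this] obtain U where U: "ultra U" "X0 \<subseteq> U" "\<forall>X. finite X \<longrightarrow> - X \<in> U" by blast
  have WU: "W_var E \<Phi> \<in> U" using U(2) unfolding X0_def W_def by auto
  from YF[OF conn nz U(1) WU U(3)] obtain Y where Y: "Y \<in> U" "P Y" unfolding P_def W_def by blast
  have "W - Y \<in> U" using U(2) Y(2) unfolding X0_def by auto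
  then have "Y \<inter> (W - Y) \<in> U" using Y(1) U(1) unfolding ultra_def by blast
  then show False using U(1) unfolding ultra_def by simp
qed


theorem mainTheorem3:
  fixes E :: "'v::finite \<Rightarrow> 'v \<Rightarrow> bool" and \<Phi> :: "complex poly poly" and d :: nat
  assumes "simple_graph E" and "graph_connected E" and "regular E d"
    and "symmetric2 \<Phi>" and "standard2 \<Phi>" and "partial_degree \<Phi> = d"
  shows "finite {u \<in> U_var E \<Phi>. improper u} \<and>
         ({u \<in> U_var E \<Phi>. improper u} \<noteq> {} \<longrightarrow> zariski_dim (U_var E \<Phi>) = 1)"
proof -
  have conn: "\<And>i j. E\<^sup>*\<^sup>* i j" using assms(2) unfolding graph_connected_def by auto
  have nz: "\<And>a. map_poly (\<lambda>c. poly c a) \<Phi> \<noteq> 0" using assms(5) by (rule nz_of_standard)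
  define W where "W = W_var E \<Phi>"
  define U where "U = U_var E \<Phi>"
  define P where "P = W - Z_var E \<Phi>"
  define \<Delta> where "\<Delta> = {u :: 'v \<Rightarrow> complex. improper u}"
  have Wc: "zariski_closed W" unfolding W_def by (rule W_closed)
  have PW: "P \<subseteq> W" unfolding P_def by auto
  have UP: "U = zariski_closure P" unfolding U_def U_var_def P_def W_def ..
  have UW: "U \<subseteq> W" unfolding UP by (rule closure_min[OF PW Wc])
  have Uc: "zariski_closed U" unfolding UP by (rule closure_closed)
  have PU: "P \<subseteq> U" unfolding UP by (rule closure_sub)
  have Pprop: "\<not> improper u" if "u \<in> P" for u
    using that unfolding P_def Z_var_def improper_def W_def by auto
  have Dc: "zariski_closed \<Delta>" unfolding \<Delta>_def by (rule improper_closed)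
  have crv: "finite (Y \<inter> Z)" if "zariski_irreducible Y" "Y \<subseteq> W" "zariski_closed Z" "\<not> Y \<subseteq> Z" for Y Z
    using curve[OF conn nz that(1) _ that(3,4)] that(2) unfolding W_def by auto
  obtain C where C: "finite C" "\<And>Y. Y \<in> C \<Longrightarrow> zariski_closed Y \<and> zariski_irreducible Y \<and> infinite Y \<and> Y \<subseteq> W"
    "finite (W - \<Union>C)"
    using decomp[OF conn nz] unfolding W_def by blast
  define F0 where "F0 = W - \<Union>C"
  have F0c: "zariski_closed F0" unfolding F0_def by (rule zc_finite[OF C(3)])
  have cover: "A \<subseteq> F0 \<union> (\<Union>Y\<in>C. Y \<inter> A)" if "A \<subseteq> W" for A using that unfolding F0_def by auto
  have J: "{u \<in> U_var E \<Phi>. improper u} = U \<inter> \<Delta>" unfolding U_def \<Delta>_def by auto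
  have part1: "finite (U \<inter> \<Delta>)"
  proof -
    have fin: "finite (Y \<inter> (U \<inter> \<Delta>))" if Y: "Y \<in> C" for Y
    proof (cases "Y \<subseteq> U \<inter> \<Delta>")
      case False
      then show ?thesis using crv[of Y "U \<inter> \<Delta>"] C(2)[OF Y] zc_Int[OF Uc Dc] by auto
    next
      case True
      define C' where "C' = insert F0 (C - {Y})"
      have C'f: "finite C'" unfolding C'_def using C(1) by auto
      have C'c: "\<And>A. A \<in> C' \<Longrightarrow> zariski_closed A" unfolding C'_def using F0c C(2) by auto
      have "P \<subseteq> \<Union>C'"
      proof
        fix u assume u: "u \<in> P"
        show "u \<in> \<Union>C'"
        proof (cases "u \<in> F0")
          case True then show ?thesis unfolding C'_def by auto
        next
          case False
          then obtain Y' where Y': "Y' \<in> C" "u \<in> Y'" using u PW unfolding F0_def by auto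
          have "u \<notin> Y" using True Pprop[OF u] unfolding \<Delta>_def by auto
          then have "Y' \<noteq> Y" using Y' by auto
          then show ?thesis using Y' unfolding C'_def by auto
        qed
      qed
      then have "U \<subseteq> \<Union>C'" unfolding UP by (rule closure_min) (rule zc_Union[OF C'f C'c])
      then have "Y \<subseteq> \<Union>C'" using True by auto
      from irred_Union[OF _ C'f C'c this] C(2)[OF Y] obtain A where A: "A \<in> C'" "Y \<subseteq> A" by auto
      show ?thesis
      proof (cases "A = F0")
        case True
        then have "finite Y" using A C(3) unfolding F0_def by (auto intro: finite_subset)
        then show ?thesis by auto
      next
        case False
        then have AC: "A \<in> C" "A \<noteq> Y" using A unfolding C'_def by auto
        have "\<not> A \<subseteq> Y" using AC A(2) by auto
        then have "finite (A \<inter> Y)" using crv[of A Y] C(2)[OF AC(1)] C(2)[OF Y] by auto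
        moreover have "A \<inter> Y = Y" using A(2) by auto
        ultimately show ?thesis by auto
      qed
    qed
    have "U \<inter> \<Delta> \<subseteq> F0 \<union> (\<Union>Y\<in>C. Y \<inter> (U \<inter> \<Delta>))" using UW by (intro cover) auto
    moreover have "finite (F0 \<union> (\<Union>Y\<in>C. Y \<inter> (U \<inter> \<Delta>)))"
    proof -
      have "finite (\<Union>Y\<in>C. Y \<inter> (U \<inter> \<Delta>))" by (rule finite_UN_I[OF C(1) fin])
      then show ?thesis using C(3) unfolding F0_def by blast
    qed
    ultimately show ?thesis by (rule finite_subset)
  qed
  have part2: "zariski_dim U = 1" if ne: "U \<inter> \<Delta> \<noteq> {}"
  proof -
    have Uinf: "infinite U"
    proof
      assume "finite U"
      then have "finite P" using PU finite_subset by blast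
      then have "U \<subseteq> P" unfolding UP by (intro closure_min[OF subset_refl] zc_finite)
      then show False using ne Pprop unfolding \<Delta>_def by auto
    qed
    have "\<exists>Y\<in>C. infinite (Y \<inter> U)"
    proof (rule ccontr)
      assume "\<not> ?thesis"
      then have "finite (\<Union>Y\<in>C. Y \<inter> U)" using C(1) by (intro finite_UN_I) auto
      then have "finite (F0 \<union> (\<Union>Y\<in>C. Y \<inter> U))" using C(3) unfolding F0_def by blast
      then show False using Uinf cover[OF UW] finite_subset by blast
    qed
    then obtain Y where Y: "Y \<in> C" "infinite (Y \<inter> U)" by blast
    have YU: "Y \<subseteq> U" using crv[of Y U] C(2)[OF Y(1)] Y(2) Uc by auto
    have YP: "zariski_closed Y" "zariski_irreducible Y" "infinite Y" using C(2)[OF Y(1)] by auto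
    obtain q where q: "q \<in> Y" using YP(3) by (metis ex_in_conv finite.emptyI)
    have ch1: "irred_chain U 1"
      unfolding irred_chain_def
    proof (intro exI[of _ "\<lambda>i. if i = 0 then {q} else Y"] conjI allI impI)
      fix i :: nat assume "i \<le> 1"
      show "zariski_closed (if i = 0 then {q} else Y)" using YP zc_singleton by auto
      show "zariski_irreducible (if i = 0 then {q} else Y)" using YP irred_singleton by auto
      show "(if i = 0 then {q} else Y) \<subseteq> U" using YU q by auto
    next
      fix i :: nat assume "i < 1"
      then have "i = 0" by simp
      moreover have "{q} \<subset> Y" using q YP(3) by auto
      ultimately show "(if i = 0 then {q} else Y) \<subset> (if Suc i = 0 then {q} else Y)" by simp
    qed
    have le1: "k \<le> 1" if ch: "irred_chain U k" for k
    proof (rule ccontr)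
      assume "\<not> k \<le> 1"
      then have k2: "2 \<le> k" by simp
      obtain Ys where Ys: "\<And>i. i \<le> k \<Longrightarrow> zariski_closed (Ys i) \<and> zariski_irreducible (Ys i) \<and> Ys i \<subseteq> U"
        "\<And>i. i < k \<Longrightarrow> Ys i \<subset> Ys (Suc i)" using ch unfolding irred_chain_def by blast
      have c0: "zariski_closed (Ys 0)" "zariski_irreducible (Ys 0)" using Ys(1)[of 0] by auto
      have c1: "zariski_closed (Ys 1)" "zariski_irreducible (Ys 1)" using Ys(1)[of 1] k2 by auto
      have c2: "zariski_irreducible (Ys 2)" "Ys 2 \<subseteq> U" using Ys(1)[of 2] k2 by auto
      have s01: "Ys 0 \<subset> Ys 1" using Ys(2)[of 0] k2 by auto
      have s12: "Ys 1 \<subset> Ys 2" using Ys(2)[of 1] k2 by (auto simp: numeral_2_eq_2)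
      have "finite (Ys 2 \<inter> Ys 1)" using crv[of "Ys 2" "Ys 1"] c2 c1 s12 UW by auto
      moreover have "Ys 2 \<inter> Ys 1 = Ys 1" using s12 by auto
      ultimately have f1: "finite (Ys 1)" by simp
      have "Ys 1 \<subseteq> \<Union>{Ys 0, Ys 1 - Ys 0}" by auto
      moreover have "\<And>A. A \<in> {Ys 0, Ys 1 - Ys 0} \<Longrightarrow> zariski_closed A"
        using c0 f1 by (auto intro: zc_finite)
      ultimately obtain A where "A \<in> {Ys 0, Ys 1 - Ys 0}" "Ys 1 \<subseteq> A"
        using irred_Union[OF c1(2), of "{Ys 0, Ys 1 - Ys 0}"] by auto
      then show False using s01 c0(2) unfolding zariski_irreducible_def by auto
    qed
    have "Sup {k. irred_chain U k} = 1"
      by (rule cSup_eq_maximum) (use ch1 le1 in auto)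
    then show ?thesis unfolding zariski_dim_def .
  qed
  show ?thesis unfolding J using part1 part2 unfolding U_def by auto
qed


end
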